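(* Let $F$ be a compact metric space and $m$ a finite Radon measure on $F$. Suppose that $(\mathcal{A},\mathcal{F})$ and $(\mathcal{B},\mathcal{F})$ are local, regular, conservative, irreducible Dirichlet forms on $L^2(F,m)$ with the same domain $\mathcal{F}$, and that $\mathcal{A}(u,u)\le\mathcal{B}(u,u)$ for all $u\in\mathcal{F}$. Let $\delta>0$ and $\mathcal{E}=(1+\delta)\mathcal{B}-\mathcal{A}$. Then $(\mathcal{E},\mathcal{F})$ is a regular, local, conservative, irreducible Dirichlet form on $L^2(F,m)$. *)

theory Defs
  imports "HOL-Analysis.Analysis"
begin

text \<open>Elements of L^2(F,m) are represented by (measurable, square integrable) functions;
  forms are required to be compatible with a.e. equality.\<close>

definition L2 :: "'a measure \<Rightarrow> ('a \<Rightarrow> real) set" where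
  "L2 M = {u. u \<in> borel_measurable M \<and> integrable M (\<lambda>x. (u x)^2)}"

definition ip :: "'a measure \<Rightarrow> ('a \<Rightarrow> real) \<Rightarrow> ('a \<Rightarrow> real) \<Rightarrow> real" where
  "ip M u v = integral\<^sup>L M (\<lambda>x. u x * v x)"

definition E1 :: "'a measure \<Rightarrow> (('a \<Rightarrow> real) \<Rightarrow> ('a \<Rightarrow> real) \<Rightarrow> real) \<Rightarrow> ('a \<Rightarrow> real) \<Rightarrow> real" where
  "E1 M E u = E u u + ip M u u"

definition symmetric_form ::
  "'a measure \<Rightarrow> ('a \<Rightarrow> real) set \<Rightarrow> (('a \<Rightarrow> real) \<Rightarrow> ('a \<Rightarrow> real) \<Rightarrow> real) \<Rightarrow> bool" where
  "symmetric_form M D E \<longleftrightarrow>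
     D \<subseteq> L2 M \<and> (\<lambda>x. 0) \<in> D
   \<and> (\<forall>u\<in>D. \<forall>v\<in>D. (\<lambda>x. u x + v x) \<in> D)
   \<and> (\<forall>c::real. \<forall>u\<in>D. (\<lambda>x. c * u x) \<in> D)
   \<and> (\<forall>u\<in>D. \<forall>v\<in>L2 M. (AE x in M. u x = v x) \<longrightarrow> v \<in> D \<and> (\<forall>w\<in>D. E u w = E v w))
   \<and> (\<forall>u\<in>D. \<forall>v\<in>D. E u v = E v u)
   \<and> (\<forall>u\<in>D. \<forall>v\<in>D. \<forall>w\<in>D. E (\<lambda>x. u x + v x) w = E u w + E v w)
   \<and> (\<forall>c::real. \<forall>u\<in>D. \<forall>w\<in>D. E (\<lambda>x. c * u x) w = c * E u w)
   \<and> (\<forall>u\<in>D. E u u \<ge> 0)"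

definition dense_domain :: "'a measure \<Rightarrow> ('a \<Rightarrow> real) set \<Rightarrow> bool" where
  "dense_domain M D \<longleftrightarrow>
     (\<forall>f\<in>L2 M. \<forall>e>0. \<exists>u\<in>D. ip M (\<lambda>x. f x - u x) (\<lambda>x. f x - u x) < e)"

definition closed_form ::
  "'a measure \<Rightarrow> ('a \<Rightarrow> real) set \<Rightarrow> (('a \<Rightarrow> real) \<Rightarrow> ('a \<Rightarrow> real) \<Rightarrow> real) \<Rightarrow> bool" where
  "closed_form M D E \<longleftrightarrow>
     (\<forall>s :: nat \<Rightarrow> 'a \<Rightarrow> real. (\<forall>n. s n \<in> D) \<and>
        (\<forall>e>0. \<exists>N. \<forall>n\<ge>N. \<forall>k\<ge>N. E1 M E (\<lambda>x. s n x - s k x) < e)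
      \<longrightarrow> (\<exists>u\<in>D. (\<lambda>n. E1 M E (\<lambda>x. s n x - u x)) \<longlonglongrightarrow> 0))"

definition markovian ::
  "'a measure \<Rightarrow> ('a \<Rightarrow> real) set \<Rightarrow> (('a \<Rightarrow> real) \<Rightarrow> ('a \<Rightarrow> real) \<Rightarrow> real) \<Rightarrow> bool" where
  "markovian M D E \<longleftrightarrow>
     (\<forall>u\<in>D. (\<lambda>x. min 1 (max 0 (u x))) \<in> D \<and>
        E (\<lambda>x. min 1 (max 0 (u x))) (\<lambda>x. min 1 (max 0 (u x))) \<le> E u u)"

definition dirichlet_form ::
  "'a measure \<Rightarrow> ('a \<Rightarrow> real) set \<Rightarrow> (('a \<Rightarrow> real) \<Rightarrow> ('a \<Rightarrow> real) \<Rightarrow> real) \<Rightarrow> bool" where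
  "dirichlet_form M D E \<longleftrightarrow>
     symmetric_form M D E \<and> dense_domain M D \<and> closed_form M D E \<and> markovian M D E"

text \<open>Regularity (the state space F = space M is compact, so C_c(F) = C(F)).\<close>
definition regular_form ::
  "'a::topological_space measure \<Rightarrow> ('a \<Rightarrow> real) set \<Rightarrow> (('a \<Rightarrow> real) \<Rightarrow> ('a \<Rightarrow> real) \<Rightarrow> real) \<Rightarrow> bool" where
  "regular_form M D E \<longleftrightarrow>
     (\<forall>u\<in>D. \<forall>e>0. \<exists>v\<in>D. continuous_on (space M) v \<and> E1 M E (\<lambda>x. u x - v x) < e)
   \<and> (\<forall>g. continuous_on (space M) g \<longrightarrow>
        (\<forall>e>0. \<exists>v\<in>D. continuous_on (space M) v \<and> (\<forall>x\<in>space M. \<bar>v x - g x\<bar> < e)))"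

definition fn_support :: "'a::topological_space measure \<Rightarrow> ('a \<Rightarrow> real) \<Rightarrow> 'a set" where
  "fn_support M u = space M - \<Union>{U. open U \<and> (AE x in M. x \<in> U \<longrightarrow> u x = 0)}"

definition local_form ::
  "'a::topological_space measure \<Rightarrow> ('a \<Rightarrow> real) set \<Rightarrow> (('a \<Rightarrow> real) \<Rightarrow> ('a \<Rightarrow> real) \<Rightarrow> real) \<Rightarrow> bool" where
  "local_form M D E \<longleftrightarrow>
     (\<forall>u\<in>D. \<forall>v\<in>D. compact (fn_support M u) \<and> compact (fn_support M v) \<and>
        fn_support M u \<inter> fn_support M v = {} \<longrightarrow> E u v = 0)"

text \<open>u = G_alpha f, the alpha-resolvent of f (unique solution in D of E_alpha(u,v) = (f,v)).\<close>
definition resolvent_sol ::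
  "'a measure \<Rightarrow> ('a \<Rightarrow> real) set \<Rightarrow> (('a \<Rightarrow> real) \<Rightarrow> ('a \<Rightarrow> real) \<Rightarrow> real) \<Rightarrow> real
     \<Rightarrow> ('a \<Rightarrow> real) \<Rightarrow> ('a \<Rightarrow> real) \<Rightarrow> bool" where
  "resolvent_sol M D E \<alpha> f u \<longleftrightarrow> u \<in> D \<and> (\<forall>v\<in>D. E u v + \<alpha> * ip M u v = ip M f v)"

text \<open>Conservativeness: alpha G_alpha 1 = 1 for all alpha > 0 (equivalently T_t 1 = 1).\<close>
definition conservative_form ::
  "'a measure \<Rightarrow> ('a \<Rightarrow> real) set \<Rightarrow> (('a \<Rightarrow> real) \<Rightarrow> ('a \<Rightarrow> real) \<Rightarrow> real) \<Rightarrow> bool" where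
  "conservative_form M D E \<longleftrightarrow> (\<forall>\<alpha>>0. resolvent_sol M D E \<alpha> (\<lambda>x. 1) (\<lambda>x. 1 / \<alpha>))"

definition invariant_set ::
  "'a measure \<Rightarrow> ('a \<Rightarrow> real) set \<Rightarrow> (('a \<Rightarrow> real) \<Rightarrow> ('a \<Rightarrow> real) \<Rightarrow> real) \<Rightarrow> 'a set \<Rightarrow> bool" where
  "invariant_set M D E A \<longleftrightarrow> A \<in> sets M \<and>
     (\<forall>\<alpha>>0. \<forall>f\<in>L2 M. \<forall>u. resolvent_sol M D E \<alpha> f u \<longrightarrow>
        resolvent_sol M D E \<alpha> (\<lambda>x. indicator A x * f x) (\<lambda>x. indicator A x * u x))"

definition irreducible_form ::
  "'a measure \<Rightarrow> ('a \<Rightarrow> real) set \<Rightarrow> (('a \<Rightarrow> real) \<Rightarrow> ('a \<Rightarrow> real) \<Rightarrow> real) \<Rightarrow> bool" where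
  "irreducible_form M D E \<longleftrightarrow>
     (\<forall>A. invariant_set M D E A \<longrightarrow> emeasure M A = 0 \<or> emeasure M (space M - A) = 0)"

definition radon_measure :: "'a::topological_space measure \<Rightarrow> bool" where
  "radon_measure M \<longleftrightarrow>
     (\<forall>K. compact K \<and> K \<subseteq> space M \<longrightarrow> emeasure M K < \<infinity>) \<and>
     (\<forall>B\<in>sets M. emeasure M B = (SUP K\<in>{K. compact K \<and> K \<subseteq> B}. emeasure M K))"

end

theory Submission
  imports Defs
begin

lemma sq_add_le: "((a::real)+b)^2 \<le> 2*a^2 + 2*b^2"
proof -
  have "0 \<le> (a-b)^2" by simp
  thus ?thesis by (simp add: power2_eq_square algebra_simps)
qed

lemma sq_tri: "((a::real) - c)^2 \<le> 2*(a-b)^2 + 2*(b-c)^2"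
  using sq_add_le[of "a-b" "b-c"] by simp

lemma L2_D: "u \<in> L2 M \<Longrightarrow> u \<in> borel_measurable M" "u \<in> L2 M \<Longrightarrow> integrable M (\<lambda>x. (u x)^2)"
  by (auto simp: L2_def)

lemma L2_I: "u \<in> borel_measurable M \<Longrightarrow> integrable M g \<Longrightarrow> (\<And>x. x \<in> space M \<Longrightarrow> (u x)^2 \<le> g x) \<Longrightarrow> u \<in> L2 M"
proof -
  assume m: "u \<in> borel_measurable M" and g: "integrable M g" and b: "\<And>x. x \<in> space M \<Longrightarrow> (u x)^2 \<le> g x"
  have "integrable M (\<lambda>x. (u x)^2)"
  proof (rule Bochner_Integration.integrable_bound[OF g])
    show "(\<lambda>x. (u x)^2) \<in> borel_measurable M" using m by measurable
    show "AE x in M. norm ((u x)^2) \<le> norm (g x)"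
      using b by (auto intro!: AE_I2) (smt (verit) zero_le_power2)
  qed
  thus ?thesis using m by (simp add: L2_def)
qed

lemma L2_add: "u \<in> L2 M \<Longrightarrow> v \<in> L2 M \<Longrightarrow> (\<lambda>x. u x + v x) \<in> L2 M"
  by (rule L2_I[where g="\<lambda>x. 2 * (u x)^2 + 2 * (v x)^2"]) (auto simp: L2_def sq_add_le)

lemma L2_smult: "u \<in> L2 M \<Longrightarrow> (\<lambda>x. c * u x) \<in> L2 M"
  by (rule L2_I[where g="\<lambda>x. c^2 * (u x)^2"]) (auto simp: L2_def power_mult_distrib)

lemma L2_diff: "u \<in> L2 M \<Longrightarrow> v \<in> L2 M \<Longrightarrow> (\<lambda>x. u x - v x) \<in> L2 M"
  using L2_add[of u M "\<lambda>x. -1 * v x"] L2_smult[of v M "-1"] by simp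

lemma L2_const: "finite_measure M \<Longrightarrow> (\<lambda>x. c) \<in> L2 M"
  by (auto simp: L2_def finite_measure.integrable_const)

lemma L2_mult_int: "u \<in> L2 M \<Longrightarrow> v \<in> L2 M \<Longrightarrow> integrable M (\<lambda>x. u x * v x)"
proof -
  assume u: "u \<in> L2 M" and v: "v \<in> L2 M"
  have i: "integrable M (\<lambda>x. (u x)^2 + (v x)^2)" using u v by (auto simp: L2_def)
  show ?thesis
  proof (rule Bochner_Integration.integrable_bound[OF i])
    show "(\<lambda>x. u x * v x) \<in> borel_measurable M" using u v by (auto simp: L2_def)
    have "\<And>a b::real. \<bar>a * b\<bar> \<le> a^2 + b^2"
    proof -
      fix a b :: real
      have "0 \<le> (a-b)^2" "0 \<le> (a+b)^2" by simp_all
      thus "\<bar>a * b\<bar> \<le> a^2 + b^2" by (simp add: power2_eq_square algebra_simps abs_if)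
    qed
    thus "AE x in M. norm (u x * v x) \<le> norm ((u x)^2 + (v x)^2)" by (auto intro!: AE_I2)
  qed
qed

lemma ip_sq: "ip M u u = integral\<^sup>L M (\<lambda>x. (u x)^2)"
  by (simp add: ip_def power2_eq_square)

lemma ip_nonneg: "0 \<le> ip M u u"
  by (auto simp: ip_def intro!: integral_nonneg_AE)

lemma ip_mono: "u \<in> borel_measurable M \<Longrightarrow> integrable M g \<Longrightarrow> (\<And>x. x \<in> space M \<Longrightarrow> (u x)^2 \<le> g x)
   \<Longrightarrow> ip M u u \<le> integral\<^sup>L M g"
proof -
  assume m: "u \<in> borel_measurable M" and g: "integrable M g" and b: "\<And>x. x \<in> space M \<Longrightarrow> (u x)^2 \<le> g x"
  have "u \<in> L2 M" using L2_I[OF m g b] .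
  hence "integrable M (\<lambda>x. (u x)^2)" by (simp add: L2_def)
  thus ?thesis unfolding ip_sq using g b by (intro integral_mono) auto
qed

lemma ip_zero_AE: "u \<in> L2 M \<Longrightarrow> ip M u u = 0 \<Longrightarrow> AE x in M. u x = 0"
proof -
  assume u: "u \<in> L2 M" and z: "ip M u u = 0"
  have "integrable M (\<lambda>x. (u x)^2)" using u by (simp add: L2_def)
  hence "(integral\<^sup>L M (\<lambda>x. (u x)^2) = 0) \<longleftrightarrow> (AE x in M. (u x)^2 = 0)"
    by (intro integral_nonneg_eq_0_iff_AE) auto
  with z show ?thesis by (simp add: ip_sq)
qed

lemma ip_diff_tri: "u \<in> L2 M \<Longrightarrow> v \<in> L2 M \<Longrightarrow> w \<in> L2 M \<Longrightarrow>
  ip M (\<lambda>x. u x - w x) (\<lambda>x. u x - w x) \<le> 2 * ip M (\<lambda>x. u x - v x) (\<lambda>x. u x - v x) + 2 * ip M (\<lambda>x. v x - w x) (\<lambda>x. v x - w x)"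
proof -
  assume u: "u \<in> L2 M" and v: "v \<in> L2 M" and w: "w \<in> L2 M"
  have a: "(\<lambda>x. u x - v x) \<in> L2 M" "(\<lambda>x. v x - w x) \<in> L2 M" using L2_diff u v w by auto
  have "ip M (\<lambda>x. u x - w x) (\<lambda>x. u x - w x) \<le> integral\<^sup>L M (\<lambda>x. 2 * (u x - v x)^2 + 2 * (v x - w x)^2)"
    using u w a by (intro ip_mono) (auto simp: L2_def intro: sq_tri)
  also have "\<dots> = 2 * ip M (\<lambda>x. u x - v x) (\<lambda>x. u x - v x) + 2 * ip M (\<lambda>x. v x - w x) (\<lambda>x. v x - w x)"
    using a by (simp add: ip_sq L2_def)
  finally show ?thesis .
qed

locale sform =
  fixes M :: "'a measure" and D :: "('a \<Rightarrow> real) set" and X :: "('a \<Rightarrow> real) \<Rightarrow> ('a \<Rightarrow> real) \<Rightarrow> real"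
  assumes sf: "symmetric_form M D X"
begin

lemma sfc0:
  "D \<subseteq> L2 M \<and> (\<lambda>x. 0) \<in> D \<and>
  (\<forall>u\<in>D. \<forall>v\<in>D. (\<lambda>x. u x + v x) \<in> D) \<and>
  (\<forall>c::real. \<forall>u\<in>D. (\<lambda>x. c * u x) \<in> D) \<and>
  (\<forall>u\<in>D. \<forall>v\<in>L2 M. (AE x in M. u x = v x) \<longrightarrow> v \<in> D \<and> (\<forall>w\<in>D. X u w = X v w)) \<and>
  (\<forall>u\<in>D. \<forall>v\<in>D. X u v = X v u) \<and>
  (\<forall>u\<in>D. \<forall>v\<in>D. \<forall>w\<in>D. X (\<lambda>x. u x + v x) w = X u w + X v w) \<and>
  (\<forall>c::real. \<forall>u\<in>D. \<forall>w\<in>D. X (\<lambda>x. c * u x) w = c * X u w) \<and>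
  (\<forall>u\<in>D. X u u \<ge> 0)"
  using sf unfolding symmetric_form_def .

lemmas sfc = sfc0[THEN conjunct1] sfc0[THEN conjunct2, THEN conjunct1] sfc0[THEN conjunct2, THEN conjunct2, THEN conjunct1] sfc0[THEN conjunct2, THEN conjunct2, THEN conjunct2, THEN conjunct1] sfc0[THEN conjunct2, THEN conjunct2, THEN conjunct2, THEN conjunct2, THEN conjunct1] sfc0[THEN conjunct2, THEN conjunct2, THEN conjunct2, THEN conjunct2, THEN conjunct2, THEN conjunct1] sfc0[THEN conjunct2, THEN conjunct2, THEN conjunct2, THEN conjunct2, THEN conjunct2, THEN conjunct2, THEN conjunct1] sfc0[THEN conjunct2, THEN conjunct2, THEN conjunct2, THEN conjunct2, THEN conjunct2, THEN conjunct2, THEN conjunct2, THEN conjunct1] sfc0[THEN conjunct2, THEN conjunct2, THEN conjunct2, THEN conjunct2, THEN conjunct2, THEN conjunct2, THEN conjunct2, THEN conjunct2]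

lemma DL2: "u \<in> D \<Longrightarrow> u \<in> L2 M" using sfc(1) by blast
lemma zero: "(\<lambda>x. 0) \<in> D" using sfc(2) .
lemma add: "u \<in> D \<Longrightarrow> v \<in> D \<Longrightarrow> (\<lambda>x. u x + v x) \<in> D" using sfc(3) by blast
lemma smult: "u \<in> D \<Longrightarrow> (\<lambda>x. c * u x) \<in> D" using sfc(4) by blast
lemma diff: "u \<in> D \<Longrightarrow> v \<in> D \<Longrightarrow> (\<lambda>x. u x - v x) \<in> D"
  using add[of u "\<lambda>x. -1 * v x"] smult[of v "-1"] by simp
lemma ae: "u \<in> D \<Longrightarrow> v \<in> L2 M \<Longrightarrow> AE x in M. u x = v x \<Longrightarrow> v \<in> D \<and> (\<forall>w\<in>D. X u w = X v w)"
  using sfc(5) by blast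
lemma symm: "u \<in> D \<Longrightarrow> v \<in> D \<Longrightarrow> X u v = X v u" using sfc(6) by blast
lemma addL: "u \<in> D \<Longrightarrow> v \<in> D \<Longrightarrow> w \<in> D \<Longrightarrow> X (\<lambda>x. u x + v x) w = X u w + X v w"
  using sfc(7) by blast
lemma smultL: "u \<in> D \<Longrightarrow> w \<in> D \<Longrightarrow> X (\<lambda>x. c * u x) w = c * X u w"
  using sfc(8) by blast
lemma nonneg: "u \<in> D \<Longrightarrow> 0 \<le> X u u" using sfc(9) by blast
lemma addR: "u \<in> D \<Longrightarrow> v \<in> D \<Longrightarrow> w \<in> D \<Longrightarrow> X w (\<lambda>x. u x + v x) = X w u + X w v"
proof - assume a: "u \<in> D" "v \<in> D" "w \<in> D" thus ?thesis using addL[OF a] symm[OF a(3) add[OF a(1,2)]] symm[OF a(3) a(1)] symm[OF a(3) a(2)] by simp qed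
lemma smultR: "u \<in> D \<Longrightarrow> w \<in> D \<Longrightarrow> X w (\<lambda>x. c * u x) = c * X w u"
proof - assume a: "u \<in> D" "w \<in> D" thus ?thesis using smultL[OF a] symm[OF a(2) smult[OF a(1)]] symm[OF a(2) a(1)] by simp qed
lemma diffL: "u \<in> D \<Longrightarrow> v \<in> D \<Longrightarrow> w \<in> D \<Longrightarrow> X (\<lambda>x. u x - v x) w = X u w - X v w"
  using addL[of u "\<lambda>x. -1 * v x" w] smult[of v "-1"] smultL[of v w "-1"] by simp
lemma diffR: "u \<in> D \<Longrightarrow> v \<in> D \<Longrightarrow> w \<in> D \<Longrightarrow> X w (\<lambda>x. u x - v x) = X w u - X w v"
proof - assume a: "u \<in> D" "v \<in> D" "w \<in> D" thus ?thesis using diffL[OF a] symm[OF a(3) diff[OF a(1,2)]] symm[OF a(3) a(1)] symm[OF a(3) a(2)] by simp qed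

lemma cong: "u \<in> D \<Longrightarrow> (\<And>x. x \<in> space M \<Longrightarrow> u x = v x) \<Longrightarrow> v \<in> D \<and> (\<forall>w\<in>D. X u w = X v w \<and> X w u = X w v)"
proof -
  assume u: "u \<in> D" and e: "\<And>x. x \<in> space M \<Longrightarrow> u x = v x"
  have uL: "u \<in> L2 M" using DL2 u .
  have "v \<in> borel_measurable M" using uL e measurable_cong[of M u v] by (auto simp: L2_def)
  moreover have "integrable M (\<lambda>x. (v x)^2)"
    using uL e Bochner_Integration.integrable_cong[of M M "\<lambda>x. (u x)^2" "\<lambda>x. (v x)^2"] by (auto simp: L2_def)
  ultimately have vL: "v \<in> L2 M" by (simp add: L2_def)
  have "AE x in M. u x = v x" using e by (auto intro!: AE_I2)
  from ae[OF u vL this] have vD: "v \<in> D" and h: "\<forall>w\<in>D. X u w = X v w" by auto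
  have h2: "X w u = X w v" if "w \<in> D" for w
  proof -
    have "X w u = X u w" using symm[OF that u] .
    also have "\<dots> = X v w" using h that by auto
    also have "\<dots> = X w v" using symm[OF vD that] .
    finally show ?thesis .
  qed
  have "\<forall>w\<in>D. X u w = X v w \<and> X w u = X w v" using h h2 by blast
  thus ?thesis using vD by (rule conjI[rotated])
qed

lemma quad_add: "u \<in> D \<Longrightarrow> v \<in> D \<Longrightarrow> X (\<lambda>x. u x + v x) (\<lambda>x. u x + v x) = X u u + 2 * X u v + X v v"
proof -
  assume u: "u \<in> D" and v: "v \<in> D"
  have "X (\<lambda>x. u x + v x) (\<lambda>x. u x + v x) = X u (\<lambda>x. u x + v x) + X v (\<lambda>x. u x + v x)"
    by (rule addL[OF u v add[OF u v]])
  also have "\<dots> = (X u u + X u v) + (X v u + X v v)" using addR[OF u v u] addR[OF u v v] by simp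
  finally show ?thesis using symm[OF v u] by linarith
qed
lemma quad_lin: "u \<in> D \<Longrightarrow> v \<in> D \<Longrightarrow> X (\<lambda>x. u x + c * v x) (\<lambda>x. u x + c * v x) = X u u + 2 * c * X u v + c^2 * X v v"
proof -
  assume u: "u \<in> D" and v: "v \<in> D"
  have cv: "(\<lambda>x. c * v x) \<in> D" using smult[OF v] .
  have "X (\<lambda>x. u x + c * v x) (\<lambda>x. u x + c * v x) = X u u + 2 * X u (\<lambda>x. c * v x) + X (\<lambda>x. c * v x) (\<lambda>x. c * v x)"
    using quad_add[OF u cv] by simp
  also have "X u (\<lambda>x. c * v x) = c * X u v" using smultR[OF v u] .
  also have "X (\<lambda>x. c * v x) (\<lambda>x. c * v x) = c * X v (\<lambda>x. c * v x)" using smultL[OF v cv] .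
  also have "X v (\<lambda>x. c * v x) = c * X v v" using smultR[OF v v] .
  finally show ?thesis by (simp add: power2_eq_square)
qed
lemma quad_diff: "u \<in> D \<Longrightarrow> v \<in> D \<Longrightarrow> X (\<lambda>x. u x - v x) (\<lambda>x. u x - v x) = X u u - 2 * X u v + X v v"
  using quad_lin[of u v "-1"] by simp
lemma quad_smult: "u \<in> D \<Longrightarrow> X (\<lambda>x. c * u x) (\<lambda>x. c * u x) = c^2 * X u u"
proof -
  assume u: "u \<in> D"
  have "X (\<lambda>x. c * u x) (\<lambda>x. c * u x) = c * X u (\<lambda>x. c * u x)" using smultL[OF u smult[OF u]] .
  also have "X u (\<lambda>x. c * u x) = c * X u u" using smultR[OF u u] .
  finally show ?thesis by (simp add: power2_eq_square)
qed

lemma amgm: "u \<in> D \<Longrightarrow> v \<in> D \<Longrightarrow> 2 * \<bar>X u v\<bar> \<le> X u u + X v v"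
  using nonneg[OF add[of u v]] nonneg[OF diff[of u v]] quad_add[of u v] quad_diff[of u v] by linarith

lemma amgm_eta: "u \<in> D \<Longrightarrow> v \<in> D \<Longrightarrow> \<eta> > 0 \<Longrightarrow> 2 * \<bar>X u v\<bar> \<le> \<eta> * X u u + X v v / \<eta>"
proof -
  assume u: "u \<in> D" and v: "v \<in> D" and e: "\<eta> > 0"
  define s where "s = sqrt \<eta>"
  have s: "s > 0" "s * s = \<eta>" using e by (auto simp: s_def)
  have su: "(\<lambda>x. s * u x) \<in> D" and sv: "(\<lambda>x. (1/s) * v x) \<in> D" by (rule smult[OF u], rule smult[OF v])
  have "2 * \<bar>X (\<lambda>x. s * u x) (\<lambda>x. (1/s) * v x)\<bar> \<le> X (\<lambda>x. s * u x) (\<lambda>x. s * u x) + X (\<lambda>x. (1/s) * v x) (\<lambda>x. (1/s) * v x)"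
    using amgm[OF su sv] .
  also have "\<dots> = s^2 * X u u + (1/s)^2 * X v v" by (simp only: quad_smult[OF u] quad_smult[OF v])
  also have "\<dots> = \<eta> * X u u + X v v / \<eta>" using s by (simp add: power2_eq_square)
  also have "X (\<lambda>x. s * u x) (\<lambda>x. (1/s) * v x) = s * X u (\<lambda>x. (1/s) * v x)" using smultL[OF u sv] .
  also have "X u (\<lambda>x. (1/s) * v x) = (1/s) * X u v" using smultR[OF v u] .
  finally show ?thesis using s by simp
qed

lemma quad_mid: "u \<in> D \<Longrightarrow> v \<in> D \<Longrightarrow>
  X (\<lambda>x. u x - v x) (\<lambda>x. u x - v x) = 2 * X u u + 2 * X v v - 4 * X (\<lambda>x. 1/2 * u x + 1/2 * v x) (\<lambda>x. 1/2 * u x + 1/2 * v x)"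
proof -
  assume u: "u \<in> D" and v: "v \<in> D"
  have e: "(\<lambda>x. 1/2 * u x + 1/2 * v x) = (\<lambda>x. 1/2 * (u x + v x))" by (rule ext) (simp add: field_simps)
  have "X (\<lambda>x. 1/2 * (u x + v x)) (\<lambda>x. 1/2 * (u x + v x)) = (1/2)^2 * X (\<lambda>x. u x + v x) (\<lambda>x. u x + v x)"
    by (rule quad_smult[OF add[OF u v]])
  also have "\<dots> = 1/4 * (X u u + 2 * X u v + X v v)" using quad_add[OF u v] by (simp add: power2_eq_square)
  finally have q: "X (\<lambda>x. 1/2 * (u x + v x)) (\<lambda>x. 1/2 * (u x + v x)) = 1/4 * (X u u + 2 * X u v + X v v)" .
  show ?thesis unfolding e by (simp only: q quad_diff[OF u v]) (simp add: algebra_simps)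
qed

end

inductive_set cvx :: "(nat \<Rightarrow> 'a \<Rightarrow> real) \<Rightarrow> nat \<Rightarrow> ('a \<Rightarrow> real) set"
  for F :: "nat \<Rightarrow> 'a \<Rightarrow> real" and N :: nat where
  base: "n \<ge> N \<Longrightarrow> F n \<in> cvx F N"
| comb: "g \<in> cvx F N \<Longrightarrow> h \<in> cvx F N \<Longrightarrow> 0 \<le> t \<Longrightarrow> t \<le> 1 \<Longrightarrow> (\<lambda>x. t * g x + (1 - t) * h x) \<in> cvx F N"

lemma cvx_mono: "N \<le> K \<Longrightarrow> g \<in> cvx F K \<Longrightarrow> g \<in> cvx F N"
proof -
  assume NK: "N \<le> K" and g: "g \<in> cvx F K"
  from g show ?thesis
  proof (induction rule: cvx.induct)
    case (base n) thus ?case using NK by (intro cvx.base) auto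
  next
    case (comb g h t) thus ?case by (intro cvx.comb) auto
  qed
qed

lemma cvx_mid: "g \<in> cvx F N \<Longrightarrow> h \<in> cvx F N \<Longrightarrow> (\<lambda>x. 1/2 * g x + 1/2 * h x) \<in> cvx F N"
  using cvx.comb[of g F N h "1/2"] by (simp add: field_simps)

lemma sq_conv: "0 \<le> (t::real) \<Longrightarrow> t \<le> 1 \<Longrightarrow> (t * a + (1 - t) * b)^2 \<le> t * a^2 + (1 - t) * b^2"
proof -
  assume t: "0 \<le> t" "t \<le> 1"
  have "0 \<le> t * (1 - t) * (a - b)^2" using t by simp
  moreover have "t * a^2 + (1 - t) * b^2 - (t * a + (1 - t) * b)^2 = t * (1 - t) * (a - b)^2"
    by (simp add: power2_eq_square algebra_simps)
  ultimately show ?thesis by linarith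
qed

lemma ip_swap: "ip M (\<lambda>x. a x - b x) (\<lambda>x. a x - b x) = ip M (\<lambda>x. b x - a x) (\<lambda>x. b x - a x)"
  unfolding ip_def by (rule Bochner_Integration.integral_cong) (auto simp: algebra_simps)

lemma cvx_L2: "f \<in> L2 M \<Longrightarrow> (\<And>n. n \<ge> N \<Longrightarrow> F n \<in> L2 M \<and> ip M (\<lambda>x. F n x - f x) (\<lambda>x. F n x - f x) \<le> e)
  \<Longrightarrow> g \<in> cvx F N \<Longrightarrow> g \<in> L2 M \<and> ip M (\<lambda>x. g x - f x) (\<lambda>x. g x - f x) \<le> e"
proof -
  assume f: "f \<in> L2 M" and b: "\<And>n. n \<ge> N \<Longrightarrow> F n \<in> L2 M \<and> ip M (\<lambda>x. F n x - f x) (\<lambda>x. F n x - f x) \<le> e"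
    and g: "g \<in> cvx F N"
  from g show ?thesis
  proof (induction rule: cvx.induct)
    case (base n) thus ?case using b by auto
  next
    case (comb g h t)
    have gL: "g \<in> L2 M" and hL: "h \<in> L2 M" using comb by auto
    have nL: "(\<lambda>x. t * g x + (1 - t) * h x) \<in> L2 M" using gL hL by (intro L2_add L2_smult)
    have dg: "(\<lambda>x. g x - f x) \<in> L2 M" and dh: "(\<lambda>x. h x - f x) \<in> L2 M" using gL hL f by (auto intro: L2_diff)
    have "ip M (\<lambda>x. t * g x + (1 - t) * h x - f x) (\<lambda>x. t * g x + (1 - t) * h x - f x)
      \<le> integral\<^sup>L M (\<lambda>x. t * (g x - f x)^2 + (1 - t) * (h x - f x)^2)"
    proof (rule ip_mono)
      show "(\<lambda>x. t * g x + (1 - t) * h x - f x) \<in> borel_measurable M" using L2_diff[OF nL f] by (simp add: L2_def)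
      show "integrable M (\<lambda>x. t * (g x - f x)^2 + (1 - t) * (h x - f x)^2)" using dg dh by (auto simp: L2_def)
      fix x
      have "t * g x + (1 - t) * h x - f x = t * (g x - f x) + (1 - t) * (h x - f x)" by (simp add: algebra_simps)
      thus "(t * g x + (1 - t) * h x - f x)^2 \<le> t * (g x - f x)^2 + (1 - t) * (h x - f x)^2"
        using sq_conv[OF comb.hyps(3) comb.hyps(4)] by simp
    qed
    also have "\<dots> = t * ip M (\<lambda>x. g x - f x) (\<lambda>x. g x - f x) + (1 - t) * ip M (\<lambda>x. h x - f x) (\<lambda>x. h x - f x)"
      using dg dh by (simp add: ip_sq L2_def)
    also have "\<dots> \<le> t * e + (1 - t) * e" using comb by (intro add_mono mult_left_mono) auto
    finally show ?case using nL by (simp add: algebra_simps)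
  qed
qed

context sform begin

lemma cvx_D: "(\<And>n. F n \<in> D) \<Longrightarrow> g \<in> cvx F N \<Longrightarrow> g \<in> D"
proof -
  assume F: "\<And>n. F n \<in> D" and g: "g \<in> cvx F N"
  from g show ?thesis
  proof (induction rule: cvx.induct)
    case (base n) thus ?case using F by auto
  next
    case (comb g h t) thus ?case by (intro add smult)
  qed
qed

lemma lsc:
  assumes cl: "closed_form M D X"
  and F: "\<And>n. F n \<in> D" and C: "\<And>n. X (F n) (F n) \<le> C"
  and conv: "(\<lambda>n. ip M (\<lambda>x. F n x - f x) (\<lambda>x. F n x - f x)) \<longlonglongrightarrow> 0"
  and f: "f \<in> L2 M"
  shows "f \<in> D \<and> X f f \<le> C"
proof -
  define r where "r N = Inf ((\<lambda>g. X g g) ` cvx F N)" for N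
  have hD: "g \<in> cvx F N \<Longrightarrow> g \<in> D" for g N using cvx_D[OF F] .
  have bdd: "bdd_below ((\<lambda>g. X g g) ` cvx F N)" for N
    by (rule bdd_belowI[of _ 0]) (auto intro: nonneg hD)
  have rle: "r N \<le> X g g" if "g \<in> cvx F N" for g N
    unfolding r_def using that bdd by (intro cInf_lower) auto
  have rC: "r N \<le> C" for N using rle[OF cvx.base[of N N F]] C[of N] by simp
  have rmono: "r N \<le> r K" if "N \<le> K" for N K
    unfolding r_def using cvx.base[of K K F] bdd cvx_mono[OF that]
    by (intro cInf_superset_mono) auto
  have inc: "incseq r" unfolding incseq_def using rmono by blast
  obtain R where R: "r \<longlonglongrightarrow> R" "\<forall>i. r i \<le> R" using incseq_convergent[OF inc, of C] rC by blast
  have "\<exists>g. g \<in> cvx F N \<and> X g g < r N + 1 / (real N + 1)" for N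
  proof -
    have "Inf ((\<lambda>g. X g g) ` cvx F N) < r N + 1 / (real N + 1)" unfolding r_def by simp
    from cInf_lessD[OF _ this] cvx.base[of N N F] show ?thesis by blast
  qed
  then obtain G where G: "\<And>N. G N \<in> cvx F N" "\<And>N. X (G N) (G N) < r N + 1 / (real N + 1)" by metis
  have GD: "G N \<in> D" for N using hD[OF G(1)] .
  have Gf: "\<exists>N0. \<forall>N\<ge>N0. ip M (\<lambda>x. G N x - f x) (\<lambda>x. G N x - f x) \<le> e" if e: "e > 0" for e
  proof -
    obtain N0 where N0: "\<forall>n\<ge>N0. norm (ip M (\<lambda>x. F n x - f x) (\<lambda>x. F n x - f x) - 0) < e"
      using LIMSEQ_D[OF conv e] by blast
    have "ip M (\<lambda>x. G N x - f x) (\<lambda>x. G N x - f x) \<le> e" if "N \<ge> N0" for N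
    proof -
      have "F n \<in> L2 M \<and> ip M (\<lambda>x. F n x - f x) (\<lambda>x. F n x - f x) \<le> e" if "n \<ge> N" for n
      proof -
        have "n \<ge> N0" using \<open>N \<ge> N0\<close> that by simp
        hence "\<bar>ip M (\<lambda>x. F n x - f x) (\<lambda>x. F n x - f x)\<bar> < e" using N0 by auto
        thus ?thesis using DL2[OF F[of n]] by simp
      qed
      thus ?thesis using cvx_L2[OF f _ G(1)[of N], of e] by blast
    qed
    thus ?thesis by blast
  qed
  have cauchy: "\<exists>N. \<forall>n\<ge>N. \<forall>k\<ge>N. E1 M X (\<lambda>x. G n x - G k x) < e" if e: "e > 0" for e
  proof -
    obtain N1 where N1: "\<forall>n\<ge>N1. norm (r n - R) < e / 16" using LIMSEQ_D[OF R(1), of "e/16"] e by auto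
    obtain N2 where N2: "1 / (real N2 + 1) < e / 16"
    proof -
      obtain n :: nat where "1 / (e / 16) < real n" using reals_Archimedean2 by blast
      hence "1 / (real n + 1) < e / 16" using e by (simp add: field_simps)
      thus ?thesis using that by blast
    qed
    obtain N3 where N3: "\<forall>N\<ge>N3. ip M (\<lambda>x. G N x - f x) (\<lambda>x. G N x - f x) \<le> e / 16" using Gf[of "e/16"] e by auto
    define N where "N = max N1 (max N2 N3)"
    have "E1 M X (\<lambda>x. G n x - G k x) < e" if n: "n \<ge> N" and k: "k \<ge> N" for n k
    proof -
      have mid: "(\<lambda>x. 1/2 * G n x + 1/2 * G k x) \<in> cvx F N"
        using cvx_mid[OF cvx_mono[OF n G(1)] cvx_mono[OF k G(1)]] .
      have rN: "R - r N < e / 16" using N1 R(2) by (auto simp: N_def)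
      have inv: "1 / (real m + 1) < e / 16" if "m \<ge> N" for m
      proof -
        have "real N2 \<le> real m" using that by (auto simp: N_def)
        hence "1 / (real m + 1) \<le> 1 / (real N2 + 1)" by (intro divide_left_mono) auto
        thus ?thesis using N2 by linarith
      qed
      define mm where "mm = (\<lambda>x. 1/2 * G n x + 1/2 * G k x)"
      have q: "X (\<lambda>x. G n x - G k x) (\<lambda>x. G n x - G k x) = 2 * X (G n) (G n) + 2 * X (G k) (G k) - 4 * X mm mm"
        unfolding mm_def by (rule quad_mid[OF GD GD])
      have rm: "r N \<le> X mm mm" unfolding mm_def by (rule rle[OF mid])
      have "X (G n) (G n) \<le> R + e/16" using G(2)[of n] R(2)[rule_format, of n] inv[OF n] by linarith
      moreover have "X (G k) (G k) \<le> R + e/16" using G(2)[of k] R(2)[rule_format, of k] inv[OF k] by linarith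
      ultimately have "X (\<lambda>x. G n x - G k x) (\<lambda>x. G n x - G k x) < e / 2" using q rm rN by linarith
      hence a: "X (\<lambda>x. G n x - G k x) (\<lambda>x. G n x - G k x) < e / 2" .
      have "ip M (\<lambda>x. G n x - G k x) (\<lambda>x. G n x - G k x) \<le>
        2 * ip M (\<lambda>x. G n x - f x) (\<lambda>x. G n x - f x) + 2 * ip M (\<lambda>x. f x - G k x) (\<lambda>x. f x - G k x)"
        using ip_diff_tri[OF DL2[OF GD] f DL2[OF GD]] .
      also have "\<dots> \<le> 2 * (e/16) + 2 * (e/16)"
        using N3 n k ip_swap[of M f "G k"] by (intro add_mono) (auto simp: N_def)
      finally have b: "ip M (\<lambda>x. G n x - G k x) (\<lambda>x. G n x - G k x) < e / 2" using e by simp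
      show ?thesis using a b by (simp add: E1_def)
    qed
    thus ?thesis by blast
  qed
  obtain u where uD: "u \<in> D" and uconv: "(\<lambda>n. E1 M X (\<lambda>x. G n x - u x)) \<longlonglongrightarrow> 0"
    using cl unfolding closed_form_def using GD cauchy by blast
  have dD: "(\<lambda>x. G n x - u x) \<in> D" for n using diff[OF GD uD] .
  have ipE: "ip M (\<lambda>x. G n x - u x) (\<lambda>x. G n x - u x) \<le> E1 M X (\<lambda>x. G n x - u x)" for n
    using nonneg[OF dD] by (simp add: E1_def)
  have XE: "X (\<lambda>x. G n x - u x) (\<lambda>x. G n x - u x) \<le> E1 M X (\<lambda>x. G n x - u x)" for n
    using ip_nonneg[of M] by (simp add: E1_def)
  have uf0: "ip M (\<lambda>x. u x - f x) (\<lambda>x. u x - f x) \<le> 0"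
  proof (rule field_le_epsilon)
    fix e :: real assume e: "e > 0"
    obtain N0 where N0: "\<forall>n\<ge>N0. norm (E1 M X (\<lambda>x. G n x - u x) - 0) < e / 4" using LIMSEQ_D[OF uconv, of "e/4"] e by auto
    obtain N3 where N3: "\<forall>N\<ge>N3. ip M (\<lambda>x. G N x - f x) (\<lambda>x. G N x - f x) \<le> e / 4" using Gf[of "e/4"] e by auto
    define n where "n = max N0 N3"
    have "ip M (\<lambda>x. u x - f x) (\<lambda>x. u x - f x) \<le> 2 * ip M (\<lambda>x. u x - G n x) (\<lambda>x. u x - G n x) + 2 * ip M (\<lambda>x. G n x - f x) (\<lambda>x. G n x - f x)"
      using ip_diff_tri[OF DL2[OF uD] DL2[OF GD] f] .
    also have "\<dots> \<le> 2 * (e/4) + 2 * (e/4)"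
    proof -
      have "norm (E1 M X (\<lambda>x. G n x - u x) - 0) < e / 4" using N0[rule_format, of n] by (simp add: n_def)
      hence "ip M (\<lambda>x. u x - G n x) (\<lambda>x. u x - G n x) \<le> e/4" using ipE[of n] ip_swap[of M u "G n"] by simp
      moreover have "ip M (\<lambda>x. G n x - f x) (\<lambda>x. G n x - f x) \<le> e/4" using N3[rule_format, of n] by (simp add: n_def)
      ultimately show ?thesis by linarith
    qed
    finally show "ip M (\<lambda>x. u x - f x) (\<lambda>x. u x - f x) \<le> 0 + e" by simp
  qed
  have ufL: "(\<lambda>x. u x - f x) \<in> L2 M" using L2_diff[OF DL2[OF uD] f] .
  have "AE x in M. u x - f x = 0" using ip_zero_AE[OF ufL] uf0 ip_nonneg[of M "\<lambda>x. u x - f x"] by simp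
  hence "AE x in M. u x = f x" by auto
  from ae[OF uD f this] have fD: "f \<in> D" and uf: "\<forall>w\<in>D. X u w = X f w" by auto
  have Xf: "X f f = X u u" using uf fD uD symm by metis
  have "X u u \<le> C"
  proof (rule field_le_epsilon)
    fix e :: real assume e: "e > 0"
    define \<eta> where "\<eta> = e / (4 * (\<bar>X u u\<bar> + 1))"
    have eta: "\<eta> > 0" using e by (simp add: \<eta>_def)
    have etaX: "\<eta> * X u u \<le> e / 4"
    proof -
      have "\<eta> * X u u \<le> \<eta> * (\<bar>X u u\<bar> + 1)" using eta by (intro mult_left_mono) auto
      also have "\<dots> = e / 4" unfolding \<eta>_def by (simp add: field_simps)
      finally show ?thesis .
    qed
    obtain N0 where N0: "\<forall>n\<ge>N0. norm (E1 M X (\<lambda>x. G n x - u x) - 0) < \<eta> * e / 4"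
      using LIMSEQ_D[OF uconv, of "\<eta> * e/4"] e eta by auto
    obtain N2 where N2: "1 / (real N2 + 1) < e / 4"
    proof -
      obtain n :: nat where "1 / (e / 4) < real n" using reals_Archimedean2 by blast
      hence "1 / (real n + 1) < e / 4" using e by (simp add: field_simps)
      thus ?thesis using that by blast
    qed
    define n where "n = max N0 N2"
    have inv: "1 / (real n + 1) < e / 4"
    proof -
      have "real N2 \<le> real n" by (auto simp: n_def)
      hence "1 / (real n + 1) \<le> 1 / (real N2 + 1)" by (intro divide_left_mono) auto
      thus ?thesis using N2 by linarith
    qed
    let ?d = "\<lambda>x. G n x - u x"
    have "norm (E1 M X ?d - 0) < \<eta> * e / 4" using N0[rule_format, of n] by (simp add: n_def)
    hence Xd: "X ?d ?d < \<eta> * e / 4" using XE[of n] by simp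
    have Xd2: "X ?d ?d / \<eta> \<le> e / 4"
      using Xd eta by (simp add: field_simps)
    have "X (G n) (G n) = X u u + 2 * X u ?d + X ?d ?d" using quad_add[OF uD dD] by simp
    moreover have "2 * \<bar>X u ?d\<bar> \<le> \<eta> * X u u + X ?d ?d / \<eta>" using amgm_eta[OF uD dD eta] .
    moreover have "X (G n) (G n) < C + e / 4" using G(2)[of n] rC[of n] inv by linarith
    moreover have "0 \<le> X ?d ?d" using nonneg[OF dD] .
    ultimately have "X u u \<le> X (G n) (G n) + 2 * \<bar>X u ?d\<bar>" and "2 * \<bar>X u ?d\<bar> \<le> e / 4 + e / 4"
      and "X (G n) (G n) < C + e / 4"
      using etaX Xd2 abs_ge_minus_self[of "X u ?d"] by linarith+
    thus "X u u \<le> C + e" using e by linarith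
  qed
  thus ?thesis using fD Xf by simp
qed

end

lemma ip_scale: "ip M (\<lambda>x. c * h x) (\<lambda>x. c * h x) = c^2 * ip M h h"
  unfolding ip_def by (simp add: power2_eq_square algebra_simps)

context sform begin

lemma wc0:
  assumes cl: "closed_form M D X"
  and h: "\<And>n. h n \<in> D" and C: "\<And>n. X (h n) (h n) \<le> C"
  and conv: "(\<lambda>n. ip M (h n) (h n)) \<longlonglongrightarrow> 0"
  and g: "g \<in> D"
  shows "(\<lambda>n. X g (h n)) \<longlonglongrightarrow> 0"
proof (rule ccontr)
  assume nc: "\<not> (\<lambda>n. X g (h n)) \<longlonglongrightarrow> 0"
  have "\<exists>c>0. \<forall>N. \<exists>n\<ge>N. c \<le> \<bar>X g (h n)\<bar>"
  proof (rule ccontr)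
    assume "\<not> ?thesis"
    hence "\<forall>c>0. \<exists>N. \<forall>n\<ge>N. \<bar>X g (h n)\<bar> < c" by (meson not_le)
    hence "(\<lambda>n. X g (h n)) \<longlonglongrightarrow> 0" by (intro LIMSEQ_I) (simp add: not_less[symmetric])
    with nc show False by simp
  qed
  then obtain c where c: "c > 0" "\<forall>N. \<exists>n\<ge>N. c \<le> \<bar>X g (h n)\<bar>" by blast
  then obtain \<sigma> where sig: "\<And>N. \<sigma> N \<ge> N" "\<And>N. c \<le> \<bar>X g (h (\<sigma> N))\<bar>" by metis
  have C0: "0 \<le> C" using nonneg[OF h[of 0]] C[of 0] by simp
  define t where "t = c / (C + 1)"
  have t: "t > 0" using c C0 by (simp add: t_def)
  have tC: "t * C \<le> c"
  proof -
    have "t * C = c * (C / (C + 1))" by (simp add: t_def)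
    also have "\<dots> \<le> c * 1" using c C0 by (intro mult_left_mono) auto
    finally show ?thesis by simp
  qed
  define s where "s N = (if 0 \<le> X g (h (\<sigma> N)) then 1 else -1::real)" for N
  have s1: "s N * X g (h (\<sigma> N)) = \<bar>X g (h (\<sigma> N))\<bar>" "(s N)^2 = 1" for N by (auto simp: s_def)
  define \<phi> where "\<phi> N = (\<lambda>x. g x + (- t * s N) * h (\<sigma> N) x)" for N
  have phiD: "\<phi> N \<in> D" for N unfolding \<phi>_def by (intro add smult g h)
  have phiX: "X (\<phi> N) (\<phi> N) \<le> X g g - t * c" for N
  proof -
    have "X (\<phi> N) (\<phi> N) = X g g + 2 * (- t * s N) * X g (h (\<sigma> N)) + (- t * s N)^2 * X (h (\<sigma> N)) (h (\<sigma> N))"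
      unfolding \<phi>_def by (rule quad_lin[OF g h])
    also have "\<dots> = X g g - 2 * t * \<bar>X g (h (\<sigma> N))\<bar> + t^2 * X (h (\<sigma> N)) (h (\<sigma> N))"
      using s1[of N] by (simp add: power_mult_distrib algebra_simps)
    also have "\<dots> \<le> X g g - 2 * t * c + t * (t * C)"
      using sig(2)[of N] C[of "\<sigma> N"] t by (intro add_mono diff_mono mult_left_mono) (auto simp: power2_eq_square)
    also have "\<dots> \<le> X g g - 2 * t * c + t * c" using tC t by (intro add_mono mult_left_mono) auto
    finally show ?thesis by (simp add: mult.commute)
  qed
  have phiconv: "(\<lambda>N. ip M (\<lambda>x. \<phi> N x - g x) (\<lambda>x. \<phi> N x - g x)) \<longlonglongrightarrow> 0"
  proof (rule LIMSEQ_I)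
    fix r :: real assume r: "r > 0"
    obtain N0 where N0: "\<forall>n\<ge>N0. norm (ip M (h n) (h n) - 0) < r / (t^2)" using LIMSEQ_D[OF conv, of "r / t^2"] r t by auto
    have "norm (ip M (\<lambda>x. \<phi> N x - g x) (\<lambda>x. \<phi> N x - g x) - 0) < r" if "N \<ge> N0" for N
    proof -
      have e: "(\<lambda>x. \<phi> N x - g x) = (\<lambda>x. (- t * s N) * h (\<sigma> N) x)" by (auto simp: \<phi>_def)
      have "ip M (\<lambda>x. \<phi> N x - g x) (\<lambda>x. \<phi> N x - g x) = t^2 * ip M (h (\<sigma> N)) (h (\<sigma> N))"
        unfolding e ip_scale using s1(2)[of N] by (simp add: power_mult_distrib)
      moreover have "\<bar>ip M (h (\<sigma> N)) (h (\<sigma> N))\<bar> < r / t^2" using N0 sig(1)[of N] that by force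
      ultimately show ?thesis using t ip_nonneg[of M "h (\<sigma> N)"] by (simp add: field_simps)
    qed
    thus "\<exists>no. \<forall>n\<ge>no. norm (ip M (\<lambda>x. \<phi> n x - g x) (\<lambda>x. \<phi> n x - g x) - 0) < r" by blast
  qed
  have "g \<in> D \<and> X g g \<le> X g g - t * c" using lsc[OF cl phiD phiX phiconv DL2[OF g]] .
  moreover have "0 < t * c" using t c by simp
  ultimately show False by linarith
qed

lemma wc:
  assumes cl: "closed_form M D X"
  and h: "\<And>n. h n \<in> D" and C: "\<And>n. X (h n) (h n) \<le> C"
  and conv: "(\<lambda>n. ip M (\<lambda>x. h n x - k x) (\<lambda>x. h n x - k x)) \<longlonglongrightarrow> 0"
  and k: "k \<in> D" and g: "g \<in> D"
  shows "(\<lambda>n. X g (h n)) \<longlonglongrightarrow> X g k"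
proof -
  have dD: "(\<lambda>x. h n x - k x) \<in> D" for n using diff[OF h k] .
  have dC: "X (\<lambda>x. h n x - k x) (\<lambda>x. h n x - k x) \<le> 2 * C + 2 * X k k" for n
    using quad_diff[OF h k, of n] amgm[OF h k, of n] C[of n] abs_ge_minus_self[of "X (h n) k"] by linarith
  have "(\<lambda>n. X g (\<lambda>x. h n x - k x)) \<longlonglongrightarrow> 0" using wc0[OF cl dD dC conv g] .
  hence "(\<lambda>n. X g (h n) - X g k) \<longlonglongrightarrow> 0" using diffR[OF h k g] by simp
  from tendsto_add[OF this tendsto_const[of "X g k"]] show ?thesis by simp
qed

end

locale cform = sform +
  assumes cst: "\<And>c. (\<lambda>x. c) \<in> D" and cstX: "\<And>c w. w \<in> D \<Longrightarrow> X (\<lambda>x. c) w = 0"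
begin

lemma cstR: "w \<in> D \<Longrightarrow> X w (\<lambda>x. c) = 0" using symm[OF _ cst] cstX by metis

lemma addcL: "u \<in> D \<Longrightarrow> w \<in> D \<Longrightarrow> X (\<lambda>x. c + u x) w = X u w"
  using addL[OF cst _ _, of u w c] cstX by simp

lemma addcR: "u \<in> D \<Longrightarrow> w \<in> D \<Longrightarrow> X w (\<lambda>x. c + u x) = X w u"
  using addR[OF cst _ _, of u w c] cstR by simp

lemma addc: "u \<in> D \<Longrightarrow> (\<lambda>x. c + u x) \<in> D" using add[OF cst] .

lemma quadc: "u \<in> D \<Longrightarrow> X (\<lambda>x. c + u x) (\<lambda>x. c + u x) = X u u"
  using addcL[OF _ addc] addcR by metis

end

lemma clamp_eq: "(a::real) < b \<Longrightarrow> min b (max a y) = a + (b - a) * min 1 (max 0 ((y - a) / (b - a)))"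
proof -
  assume ab: "a < b"
  consider "y \<le> a" | "a < y \<and> y < b" | "b \<le> y" by linarith
  thus ?thesis
  proof cases
    case 1 thus ?thesis using ab by (simp add: divide_nonpos_pos)
  next
    case 2
    hence "(y - a) / (b - a) \<le> 1" "0 \<le> (y - a) / (b - a)" using ab by (auto simp: field_simps)
    thus ?thesis using 2 ab by (simp add: field_simps)
  next
    case 3
    hence "1 \<le> (y - a) / (b - a)" using ab by (auto simp: field_simps)
    thus ?thesis using 3 ab by simp
  qed
qed

locale mform = cform +
  assumes mk: "markovian M D X" and cl: "closed_form M D X"
begin

lemma unit: "u \<in> D \<Longrightarrow> (\<lambda>x. min 1 (max 0 (u x))) \<in> D \<and>
        X (\<lambda>x. min 1 (max 0 (u x))) (\<lambda>x. min 1 (max 0 (u x))) \<le> X u u"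
  using mk unfolding markovian_def by blast

lemma clamp: assumes ab: "a < b" and u: "u \<in> D"
  shows "(\<lambda>x. min b (max a (u x))) \<in> D \<and> X (\<lambda>x. min b (max a (u x))) (\<lambda>x. min b (max a (u x))) \<le> X u u"
proof -
  define v where "v = (\<lambda>x. (1 / (b - a)) * (u x - a))"
  have vD: "v \<in> D" unfolding v_def by (intro smult diff u cst)
  define T where "T = (\<lambda>x. min 1 (max 0 (v x)))"
  have TD: "T \<in> D" and TX: "X T T \<le> X v v" using unit[OF vD] by (auto simp: T_def)
  have e: "(\<lambda>x. min b (max a (u x))) = (\<lambda>x. a + (b - a) * T x)"
    using clamp_eq[OF ab] by (auto simp: T_def v_def field_simps)
  have "X (\<lambda>x. a + (b - a) * T x) (\<lambda>x. a + (b - a) * T x) = (b - a)^2 * X T T"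
    using quadc[OF smult[OF TD]] quad_smult[OF TD] by simp
  also have "\<dots> \<le> (b - a)^2 * X v v" using TX by (intro mult_left_mono) auto
  also have "X v v = (1 / (b - a))^2 * X (\<lambda>x. u x - a) (\<lambda>x. u x - a)"
    unfolding v_def by (rule quad_smult[OF diff[OF u cst]])
  also have "X (\<lambda>x. u x - a) (\<lambda>x. u x - a) = X u u"
    using quadc[OF u, of "-a"] by simp
  finally have "X (\<lambda>x. a + (b - a) * T x) (\<lambda>x. a + (b - a) * T x) \<le> X u u" using ab by (simp add: power2_eq_square)
  moreover have "(\<lambda>x. a + (b - a) * T x) \<in> D" by (intro addc smult TD)
  ultimately show ?thesis unfolding e by simp
qed

end

lemma fn_support_compact: "compact (space M) \<Longrightarrow> compact (fn_support M u)"
proof -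
  assume c: "compact (space M)"
  have "fn_support M u = space M \<inter> - \<Union>{U. open U \<and> (AE x in M. x \<in> U \<longrightarrow> u x = 0)}"
    by (auto simp: fn_support_def)
  moreover have "closed (- \<Union>{U. open U \<and> (AE x in M. x \<in> U \<longrightarrow> u x = 0)})" by (intro closed_Compl open_Union) auto
  ultimately show ?thesis using c by (simp add: compact_Int_closed)
qed

lemma fn_support_sub: "open U \<Longrightarrow> (\<And>x. x \<in> space M \<Longrightarrow> x \<in> U \<Longrightarrow> u x = 0) \<Longrightarrow> fn_support M u \<subseteq> space M - U"
proof -
  assume U: "open U" and z: "\<And>x. x \<in> space M \<Longrightarrow> x \<in> U \<Longrightarrow> u x = 0"
  have "AE x in M. x \<in> U \<longrightarrow> u x = 0" using z by (auto intro!: AE_I2)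
  hence "U \<subseteq> \<Union>{U. open U \<and> (AE x in M. x \<in> U \<longrightarrow> u x = 0)}" using U by blast
  thus ?thesis by (auto simp: fn_support_def)
qed

lemma open_level_gt: "continuous_on S (v :: _ \<Rightarrow> real) \<Longrightarrow> \<exists>U. open U \<and> U \<inter> S = {x\<in>S. v x > c}"
proof -
  assume "continuous_on S v"
  then obtain U where "open U" "U \<inter> S = v -` {c<..} \<inter> S" unfolding continuous_on_open_invariant
    by (meson open_greaterThan)
  thus ?thesis by (intro exI[of _ U]) auto
qed

lemma open_level_lt: "continuous_on S (v :: _ \<Rightarrow> real) \<Longrightarrow> \<exists>U. open U \<and> U \<inter> S = {x\<in>S. v x < c}"
proof -
  assume "continuous_on S v"
  then obtain U where "open U" "U \<inter> S = v -` {..<c} \<inter> S" unfolding continuous_on_open_invariant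
    by (meson open_lessThan)
  thus ?thesis by (intro exI[of _ U]) auto
qed

locale lform = mform M D X for M :: "'a::metric_space measure" and D X +
  assumes loc: "local_form M D X" and cpt: "compact (space M)" and fin: "finite_measure M"
begin

lemma locality: "f \<in> D \<Longrightarrow> g \<in> D \<Longrightarrow> fn_support M f \<inter> fn_support M g = {} \<Longrightarrow> X f g = 0"
  using loc fn_support_compact[OF cpt] unfolding local_form_def by blast

lemma bounded_cont: "continuous_on (space M) (v :: 'a \<Rightarrow> real) \<Longrightarrow> \<exists>B>0. \<forall>x\<in>space M. \<bar>v x\<bar> \<le> B"
proof -
  assume "continuous_on (space M) v"
  hence "compact (v ` space M)" using compact_continuous_image cpt by blast
  hence "bounded (v ` space M)" by (rule compact_imp_bounded)
  then obtain B where "\<forall>y\<in>v ` space M. \<bar>y\<bar> \<le> B" unfolding bounded_real by blast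
  hence "\<forall>x\<in>space M. \<bar>v x\<bar> \<le> \<bar>B\<bar> + 1" by force
  thus ?thesis by (intro exI[of _ "\<bar>B\<bar> + 1"]) auto
qed

lemma key:
  assumes vD: "v \<in> D" and vc: "continuous_on (space M) v"
  shows "X (\<lambda>x. min 1 (max 0 (v x))) (\<lambda>x. v x - min 1 (max 0 (v x))) = 0"
proof -
  define T where "T = (\<lambda>x. min 1 (max 0 (v x)))"
  define w where "w = (\<lambda>x. v x - T x)"
  have TD: "T \<in> D" unfolding T_def using unit[OF vD] by blast
  have wD: "w \<in> D" unfolding w_def by (rule diff[OF vD TD])
  obtain B where B: "B > 0" "\<forall>x\<in>space M. \<bar>v x\<bar> \<le> B" using bounded_cont[OF vc] by blast
  define k where "k \<epsilon> = (\<lambda>x. min \<epsilon> (max (- \<epsilon>) (w x)))" for \<epsilon> :: real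
  have kD: "k \<epsilon> \<in> D \<and> X (k \<epsilon>) (k \<epsilon>) \<le> X w w" if "\<epsilon> > 0" for \<epsilon>
    unfolding k_def using clamp[of "-\<epsilon>" \<epsilon> w] that wD by simp
  have step: "X T w = X T (k \<epsilon>)" if e: "0 < \<epsilon>" "\<epsilon> < 1" for \<epsilon>
  proof -
    define P where "P = (\<lambda>x. max 0 (v x - (1 + \<epsilon>)))"
    define N where "N = (\<lambda>x. min 0 (v x + \<epsilon>))"
    have PD: "P \<in> D"
    proof -
      have c: "(\<lambda>x. - (1 + \<epsilon>) + min (B + 2) (max (1 + \<epsilon>) (v x))) \<in> D"
        using clamp[of "1 + \<epsilon>" "B + 2" v] e B vD by (intro addc) auto
      have "\<forall>x\<in>space M. - (1 + \<epsilon>) + min (B + 2) (max (1 + \<epsilon>) (v x)) = P x"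
        using B e by (auto simp: P_def)
      thus ?thesis using cong[OF c] by blast
    qed
    have ND: "N \<in> D"
    proof -
      have c: "(\<lambda>x. \<epsilon> + min (- \<epsilon>) (max (- B - 2) (v x))) \<in> D"
        using clamp[of "- B - 2" "- \<epsilon>" v] e B vD by (intro addc) auto
      have "\<forall>x\<in>space M. \<epsilon> + min (- \<epsilon>) (max (- B - 2) (v x)) = N x"
        using B e by (auto simp: N_def)
      thus ?thesis using cong[OF c] by blast
    qed
    have kD': "k \<epsilon> \<in> D" using kD e by simp
    have wsplit: "w = (\<lambda>x. P x + (\<lambda>x. N x + k \<epsilon> x) x)"
      by (rule ext) (use e in \<open>auto simp: w_def T_def P_def N_def k_def min_def max_def\<close>)
    have XTw: "X T w = X T P + X T N + X T (k \<epsilon>)"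
      unfolding wsplit using addR[OF PD add[OF ND kD'] TD] addR[OF ND kD' TD] by simp
    have Tm1: "(\<lambda>x. -1 + T x) \<in> D" using addc[OF TD] .
    obtain U1 where U1: "open U1" "U1 \<inter> space M = {x\<in>space M. v x > 1}" using open_level_gt[OF vc] by blast
    have lv0: "v x > 1" if "x \<in> space M" "x \<in> U1" for x using U1(2) that by blast
    obtain U2 where U2: "open U2" "U2 \<inter> space M = {x\<in>space M. v x < 1 + \<epsilon>}" using open_level_lt[OF vc] by blast
    have lv1: "v x < 1 + \<epsilon>" if "x \<in> space M" "x \<in> U2" for x using U2(2) that by blast
    have s1: "fn_support M (\<lambda>x. -1 + T x) \<subseteq> space M - U1"
      by (rule fn_support_sub[OF U1(1)]) (use U1(2) in \<open>auto simp: T_def dest!: lv0\<close>)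
    have s2: "fn_support M P \<subseteq> space M - U2"
      by (rule fn_support_sub[OF U2(1)]) (use U2(2) in \<open>auto simp: P_def dest!: lv1\<close>)
    have "fn_support M (\<lambda>x. -1 + T x) \<inter> fn_support M P = {}"
    proof -
      have "x \<in> U1 \<or> x \<in> U2" if "x \<in> space M" for x
        using U1(2) U2(2) that e by (cases "v x > 1") auto
      thus ?thesis using s1 s2 by blast
    qed
    hence "X (\<lambda>x. -1 + T x) P = 0" by (rule locality[OF Tm1 PD])
    hence XTP: "X T P = 0" using addcL[OF TD PD, of "-1"] by simp
    obtain U3 where U3: "open U3" "U3 \<inter> space M = {x\<in>space M. v x < 0}" using open_level_lt[OF vc] by blast
    have lv2: "v x < 0" if "x \<in> space M" "x \<in> U3" for x using U3(2) that by blast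
    obtain U4 where U4: "open U4" "U4 \<inter> space M = {x\<in>space M. v x > - \<epsilon>}" using open_level_gt[OF vc] by blast
    have lv3: "v x > - \<epsilon>" if "x \<in> space M" "x \<in> U4" for x using U4(2) that by blast
    have s3: "fn_support M T \<subseteq> space M - U3"
      by (rule fn_support_sub[OF U3(1)]) (use U3(2) in \<open>auto simp: T_def dest!: lv2\<close>)
    have s4: "fn_support M N \<subseteq> space M - U4"
      by (rule fn_support_sub[OF U4(1)]) (use U4(2) in \<open>auto simp: N_def dest!: lv3\<close>)
    have "fn_support M T \<inter> fn_support M N = {}"
    proof -
      have "x \<in> U3 \<or> x \<in> U4" if "x \<in> space M" for x
        using U3(2) U4(2) that e by (cases "v x < 0") auto
      thus ?thesis using s3 s4 by blast
    qed
    hence XTN: "X T N = 0" by (rule locality[OF TD ND])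
    show ?thesis using XTw XTP XTN by simp
  qed
  define \<epsilon> where "\<epsilon> n = 1 / (real n + 2)" for n
  have eps: "0 < \<epsilon> n" "\<epsilon> n < 1" for n by (auto simp: \<epsilon>_def field_simps)
  let ?m = "measure M (space M)"
  have ipk: "ip M (\<lambda>x. k (\<epsilon> n) x - 0) (\<lambda>x. k (\<epsilon> n) x - 0) \<le> (\<epsilon> n)^2 * ?m" for n
  proof -
    have "ip M (\<lambda>x. k (\<epsilon> n) x - 0) (\<lambda>x. k (\<epsilon> n) x - 0) \<le> integral\<^sup>L M (\<lambda>x. (\<epsilon> n)^2)"
    proof (rule ip_mono)
      show "(\<lambda>x. k (\<epsilon> n) x - 0) \<in> borel_measurable M" using DL2[OF conjunct1[OF kD[OF eps(1)]]] by (simp add: L2_def)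
      show "integrable M (\<lambda>x. (\<epsilon> n)^2)" using fin by (simp add: finite_measure.integrable_const)
      fix x
      have "\<bar>k (\<epsilon> n) x\<bar> \<le> \<epsilon> n" using eps[of n] by (auto simp: k_def)
      from power_mono[OF this abs_ge_zero, of 2] show "(k (\<epsilon> n) x - 0)^2 \<le> (\<epsilon> n)^2" by simp
    qed
    also have "\<dots> = (\<epsilon> n)^2 * ?m" by (simp add: mult.commute)
    finally show ?thesis .
  qed
  have conv: "(\<lambda>n. ip M (\<lambda>x. k (\<epsilon> n) x - 0) (\<lambda>x. k (\<epsilon> n) x - 0)) \<longlonglongrightarrow> 0"
  proof -
    have "(\<lambda>n. (\<epsilon> n)^2 * ?m) \<longlonglongrightarrow> 0^2 * ?m"
      unfolding \<epsilon>_def by (intro tendsto_intros) real_asymp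
    hence lim0: "(\<lambda>n. (\<epsilon> n)^2 * ?m) \<longlonglongrightarrow> 0" by simp
    show ?thesis by (rule tendsto_sandwich[OF _ _ tendsto_const lim0]) (use ipk ip_nonneg in \<open>auto intro!: always_eventually\<close>)
  qed
  have "(\<lambda>n. X T (k (\<epsilon> n))) \<longlonglongrightarrow> X T (\<lambda>x. 0)"
    by (rule wc[OF cl _ _ conv zero TD]) (use kD eps in auto)
  moreover have "(\<lambda>n. X T (k (\<epsilon> n))) = (\<lambda>n. X T w)" using step[OF eps(1) eps(2)] by (intro ext) (rule sym)
  ultimately have "(\<lambda>n. X T w) \<longlonglongrightarrow> 0" using cstR[OF TD, of 0] by simp
  hence "X T w = 0" by (simp add: LIMSEQ_const_iff)
  thus ?thesis by (simp add: T_def w_def)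
qed

end

lemma quad_zero:
  assumes h: "\<And>t::real. 0 \<le> 2 * t * b + t^2 * a" and a: "0 \<le> a"
  shows "b = 0"
proof (rule ccontr)
  assume b: "b \<noteq> 0"
  define r where "r = 1 / (a + 1)"
  have r: "r > 0" "r * a < 1" using a by (auto simp: r_def field_simps)
  define t where "t = - b * r"
  have "2 * t * b + t^2 * a = r * b^2 * (r * a - 2)" by (simp add: t_def power2_eq_square algebra_simps)
  moreover have "r * b^2 > 0" using r b by simp
  moreover have "r * a - 2 < 0" using r by simp
  ultimately have "2 * t * b + t^2 * a < 0" by (simp add: mult_pos_neg)
  thus False using h[of t] by simp
qed

lemma ind01: "indicator A x = (0::real) \<or> indicator A x = (1::real)" by (simp add: indicator_def)

context mform begin

lemma congB: "u \<in> D \<Longrightarrow> \<forall>x\<in>space M. u x = v x \<Longrightarrow> v \<in> D \<and> (\<forall>w\<in>D. X u w = X v w \<and> X w u = X w v)"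
  by (rule cong) auto

lemma Z_orth:
  assumes Z: "(\<lambda>x. indicator \<Omega> x) \<in> D" "X (\<lambda>x. indicator \<Omega> x) (\<lambda>x. indicator \<Omega> x) = 0" and w: "w \<in> D"
  shows "X w (\<lambda>x. indicator \<Omega> x) = 0"
proof -
  have "\<bar>X w (\<lambda>x. indicator \<Omega> x)\<bar> \<le> 0"
  proof (rule field_le_epsilon)
    fix e :: real assume e: "e > 0"
    define \<eta> where "\<eta> = e / (X w w + 1)"
    have eta: "\<eta> > 0" using e nonneg[OF w] by (simp add: \<eta>_def)
    have "2 * \<bar>X w (\<lambda>x. indicator \<Omega> x)\<bar> \<le> \<eta> * X w w + 0 / \<eta>" using amgm_eta[OF w Z(1) eta] Z(2) by simp
    also have "\<eta> * X w w \<le> \<eta> * (X w w + 1)" using eta by simp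
    also have "\<dots> = e" using nonneg[OF w] by (simp add: \<eta>_def)
    finally show "\<bar>X w (\<lambda>x. indicator \<Omega> x)\<bar> \<le> 0 + e" using e by simp
  qed
  thus ?thesis by simp
qed

lemma split_bdd:
  assumes Z: "(\<lambda>x. indicator \<Omega> x) \<in> D" "X (\<lambda>x. indicator \<Omega> x) (\<lambda>x. indicator \<Omega> x) = 0"
  and u: "u \<in> D" and ub: "\<forall>x\<in>space M. \<bar>u x\<bar> \<le> c" and c: "c > 0"
  shows "(\<lambda>x. (1 - indicator \<Omega> x) * u x) \<in> D \<and> (\<lambda>x. indicator \<Omega> x * u x) \<in> D"
proof -
  have w0: "(\<lambda>x. u x + (2 * c) * indicator \<Omega> x) \<in> D" by (intro add smult u Z(1))
  have cl: "(\<lambda>x. min c (max (- c) (u x + (2 * c) * indicator \<Omega> x))) \<in> D"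
    using clamp[OF _ w0, of "-c" c] c by simp
  have "\<forall>x\<in>space M. min c (max (- c) (u x + (2 * c) * indicator \<Omega> x)) = c * indicator \<Omega> x + (1 - indicator \<Omega> x) * u x"
  proof
    fix x assume x: "x \<in> space M"
    show "min c (max (- c) (u x + (2 * c) * indicator \<Omega> x)) = c * indicator \<Omega> x + (1 - indicator \<Omega> x) * u x"
      using ub x by (cases "x \<in> \<Omega>") (auto simp: indicator_def abs_le_iff min_def max_def)
  qed
  hence a: "(\<lambda>x. c * indicator \<Omega> x + (1 - indicator \<Omega> x) * u x) \<in> D" by (rule conjunct1[OF congB[OF cl]])
  have "(\<lambda>x. (c * indicator \<Omega> x + (1 - indicator \<Omega> x) * u x) - c * indicator \<Omega> x) \<in> D"
    by (intro diff a smult Z(1))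
  moreover have "(\<lambda>x. (c * indicator \<Omega> x + (1 - indicator \<Omega> x) * u x) - c * indicator \<Omega> x) = (\<lambda>x. (1 - indicator \<Omega> x) * u x)"
    by auto
  ultimately have O: "(\<lambda>x. (1 - indicator \<Omega> x) * u x) \<in> D" by simp
  have "(\<lambda>x. u x - (1 - indicator \<Omega> x) * u x) \<in> D" by (intro diff u O)
  moreover have "(\<lambda>x. u x - (1 - indicator \<Omega> x) * u x) = (\<lambda>x. indicator \<Omega> x * u x)" by (auto simp: algebra_simps)
  ultimately show ?thesis using O by simp
qed

lemma cross_bdd:
  assumes Z: "(\<lambda>x. indicator \<Omega> x) \<in> D" "X (\<lambda>x. indicator \<Omega> x) (\<lambda>x. indicator \<Omega> x) = 0"
  and u: "u \<in> D" and ub: "\<forall>x\<in>space M. \<bar>u x\<bar> \<le> c"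
  and v: "v \<in> D" and vb: "\<forall>x\<in>space M. \<bar>v x\<bar> \<le> c" and c: "c > 0"
  shows "X (\<lambda>x. indicator \<Omega> x * u x) (\<lambda>x. (1 - indicator \<Omega> x) * v x) = 0"
proof -
  define x where "x = (\<lambda>z. indicator \<Omega> z * u z)"
  define y where "y = (\<lambda>z. (1 - indicator \<Omega> z) * v z)"
  have xD: "x \<in> D" unfolding x_def using split_bdd[OF Z u ub c] by blast
  have yD: "y \<in> D" unfolding y_def using split_bdd[OF Z v vb c] by blast
  have ZO: "X w (\<lambda>x. indicator \<Omega> x) = 0" if "w \<in> D" for w using Z_orth[OF Z that] .
  have ineq: "0 \<le> 2 * t * X y x + t^2 * X x x" for t
  proof -
    define K where "K = 2 * c + \<bar>t\<bar> * c"
    define yt where "yt = (\<lambda>z. y z + t * x z)"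
    have ytD: "yt \<in> D" unfolding yt_def by (intro add smult xD yD)
    have wD: "(\<lambda>z. yt z + K * indicator \<Omega> z) \<in> D" by (intro add smult ytD Z(1))
    have cl: "(\<lambda>z. min c (max (- c) (yt z + K * indicator \<Omega> z))) \<in> D \<and>
      X (\<lambda>z. min c (max (- c) (yt z + K * indicator \<Omega> z))) (\<lambda>z. min c (max (- c) (yt z + K * indicator \<Omega> z)))
      \<le> X (\<lambda>z. yt z + K * indicator \<Omega> z) (\<lambda>z. yt z + K * indicator \<Omega> z)"
      using clamp[OF _ wD, of "-c" c] c by simp
    have eq: "\<forall>z\<in>space M. min c (max (- c) (yt z + K * indicator \<Omega> z)) = y z + c * indicator \<Omega> z"
    proof
      fix z assume z: "z \<in> space M"
      show "min c (max (- c) (yt z + K * indicator \<Omega> z)) = y z + c * indicator \<Omega> z"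
      proof (cases "z \<in> \<Omega>")
        case True
        have "- (\<bar>t\<bar> * c) \<le> t * u z"
        proof -
          have "\<bar>t * u z\<bar> \<le> \<bar>t\<bar> * c" using ub z by (simp add: abs_mult mult_left_mono)
          thus ?thesis by (simp add: abs_le_iff)
        qed
        hence "c \<le> t * u z + K" using c by (simp add: K_def)
        thus ?thesis using True by (simp add: yt_def x_def y_def)
      next
        case False
        thus ?thesis using vb z by (auto simp: yt_def x_def y_def abs_le_iff)
      qed
    qed
    have "X (\<lambda>z. y z + c * indicator \<Omega> z) (\<lambda>z. y z + c * indicator \<Omega> z) =
        X (\<lambda>z. min c (max (- c) (yt z + K * indicator \<Omega> z))) (\<lambda>z. min c (max (- c) (yt z + K * indicator \<Omega> z)))"
    proof -
      let ?CL = "\<lambda>z. min c (max (- c) (yt z + K * indicator \<Omega> z))"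
      let ?V = "\<lambda>z. y z + c * indicator \<Omega> z"
      have clD: "?CL \<in> D" using cl by blast
      have VD: "?V \<in> D" and hh: "\<forall>w\<in>D. X ?CL w = X ?V w \<and> X w ?CL = X w ?V" using congB[OF clD eq] by auto
      have "X ?CL ?V = X ?V ?V" using hh VD by blast
      moreover have "X ?CL ?CL = X ?CL ?V" using hh clD by blast
      ultimately show ?thesis by simp
    qed
    also have "\<dots> \<le> X (\<lambda>z. yt z + K * indicator \<Omega> z) (\<lambda>z. yt z + K * indicator \<Omega> z)" using cl by blast
    finally have *: "X (\<lambda>z. y z + c * indicator \<Omega> z) (\<lambda>z. y z + c * indicator \<Omega> z) \<le> X (\<lambda>z. yt z + K * indicator \<Omega> z) (\<lambda>z. yt z + K * indicator \<Omega> z)" .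
    have l: "X (\<lambda>z. y z + c * indicator \<Omega> z) (\<lambda>z. y z + c * indicator \<Omega> z) = X y y"
      using quad_lin[OF yD Z(1), of c] ZO[OF yD] Z(2) by simp
    have r: "X (\<lambda>z. yt z + K * indicator \<Omega> z) (\<lambda>z. yt z + K * indicator \<Omega> z) = X yt yt"
      using quad_lin[OF ytD Z(1), of K] ZO[OF ytD] Z(2) by simp
    have "X yt yt = X y y + 2 * t * X y x + t^2 * X x x" unfolding yt_def by (rule quad_lin[OF yD xD])
    thus ?thesis using * l r by linarith
  qed
  have "X y x = 0" by (rule quad_zero[OF ineq nonneg[OF xD]])
  thus ?thesis using symm[OF xD yD] by (simp add: x_def y_def)
qed

end

lemma L2_weight: "u \<in> L2 M \<Longrightarrow> \<rho> \<in> borel_measurable M \<Longrightarrow> (\<And>x. \<rho> x = 0 \<or> \<rho> x = 1) \<Longrightarrow> (\<lambda>x. \<rho> x * u x) \<in> L2 M"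
proof -
  assume u: "u \<in> L2 M" and m: "\<rho> \<in> borel_measurable M" and r: "\<And>x. \<rho> x = 0 \<or> \<rho> x = 1"
  show ?thesis
  proof (rule L2_I[where g="\<lambda>x. (u x)^2"])
    show "(\<lambda>x. \<rho> x * u x) \<in> borel_measurable M" using u m by (auto simp: L2_def)
    show "integrable M (\<lambda>x. (u x)^2)" using u by (simp add: L2_def)
    fix x show "(\<rho> x * u x)^2 \<le> (u x)^2" using r[of x] by auto
  qed
qed

lemma ip_weight: "a \<in> L2 M \<Longrightarrow> b \<in> L2 M \<Longrightarrow> \<rho> \<in> borel_measurable M \<Longrightarrow> (\<And>x. \<rho> x = 0 \<or> \<rho> x = 1) \<Longrightarrow>
  ip M (\<lambda>x. \<rho> x * a x - \<rho> x * b x) (\<lambda>x. \<rho> x * a x - \<rho> x * b x) \<le> ip M (\<lambda>x. a x - b x) (\<lambda>x. a x - b x)"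
proof -
  assume a: "a \<in> L2 M" and b: "b \<in> L2 M" and m: "\<rho> \<in> borel_measurable M" and r: "\<And>x. \<rho> x = 0 \<or> \<rho> x = 1"
  have d: "(\<lambda>x. a x - b x) \<in> L2 M" using L2_diff[OF a b] .
  have "ip M (\<lambda>x. \<rho> x * a x - \<rho> x * b x) (\<lambda>x. \<rho> x * a x - \<rho> x * b x) \<le> integral\<^sup>L M (\<lambda>x. (a x - b x)^2)"
  proof (rule ip_mono)
    show "(\<lambda>x. \<rho> x * a x - \<rho> x * b x) \<in> borel_measurable M" using a b m by (auto simp: L2_def)
    show "integrable M (\<lambda>x. (a x - b x)^2)" using d by (simp add: L2_def)
    fix x show "(\<rho> x * a x - \<rho> x * b x)^2 \<le> (a x - b x)^2" using r[of x] by auto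
  qed
  thus ?thesis by (simp add: ip_sq)
qed

lemma trunc_conv: "u \<in> L2 M \<Longrightarrow>
  (\<lambda>n. ip M (\<lambda>x. min (real n + 1) (max (- (real n + 1)) (u x)) - u x) (\<lambda>x. min (real n + 1) (max (- (real n + 1)) (u x)) - u x)) \<longlonglongrightarrow> 0"
proof -
  assume uL: "u \<in> L2 M"
  have uM[measurable]: "u \<in> borel_measurable M" using uL by (simp add: L2_def)
  define s where "s n x = (min (real n + 1) (max (- (real n + 1)) (u x)) - u x)^2" for n x
  have "(\<lambda>i. integral\<^sup>L M (s i)) \<longlonglongrightarrow> integral\<^sup>L M (\<lambda>x. 0::real)"
  proof (rule integral_dominated_convergence[where w="\<lambda>x. (u x)^2"])
    show "(\<lambda>x. 0::real) \<in> borel_measurable M" by simp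
    show "s i \<in> borel_measurable M" for i unfolding s_def by measurable
    show "integrable M (\<lambda>x. (u x)^2)" using uL by (simp add: L2_def)
    show "AE x in M. (\<lambda>i. s i x) \<longlonglongrightarrow> 0"
    proof (rule AE_I2)
      fix x
      have "eventually (\<lambda>i. s i x = 0) sequentially"
        unfolding eventually_sequentially
      proof (intro exI allI impI)
        fix i assume "nat \<lceil>\<bar>u x\<bar>\<rceil> \<le> i"
        hence "\<bar>u x\<bar> \<le> real i" by linarith
        thus "s i x = 0" by (auto simp: s_def abs_le_iff min_def max_def)
      qed
      thus "(\<lambda>i. s i x) \<longlonglongrightarrow> 0" by (rule tendsto_eventually)
    qed
    show "AE x in M. norm (s i x) \<le> (u x)^2" for i
    proof (rule AE_I2)
      fix x
      have "\<bar>min (real i + 1) (max (- (real i + 1)) (u x)) - u x\<bar> \<le> \<bar>u x\<bar>"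
        by (auto simp: min_def max_def abs_le_iff)
      from power_mono[OF this abs_ge_zero, of 2] show "norm (s i x) \<le> (u x)^2" by (simp add: s_def)
    qed
  qed
  thus ?thesis unfolding ip_sq s_def[abs_def] by simp
qed

context mform begin

lemma parts:
  assumes Z: "(\<lambda>x. indicator \<Omega> x) \<in> D" "X (\<lambda>x. indicator \<Omega> x) (\<lambda>x. indicator \<Omega> x) = 0"
  and Om: "\<Omega> \<in> sets M" and u: "u \<in> D"
  defines "t \<equiv> \<lambda>n x. min (real n + 1) (max (- (real n + 1)) (u x))"
  shows "\<And>n. (\<lambda>x. indicator \<Omega> x * t n x) \<in> D" "\<And>n. (\<lambda>x. (1 - indicator \<Omega> x) * t n x) \<in> D"
    "\<And>n. X (\<lambda>x. indicator \<Omega> x * t n x) (\<lambda>x. indicator \<Omega> x * t n x) \<le> X u u"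
    "\<And>n. X (\<lambda>x. (1 - indicator \<Omega> x) * t n x) (\<lambda>x. (1 - indicator \<Omega> x) * t n x) \<le> X u u"
    "(\<lambda>n. ip M (\<lambda>x. indicator \<Omega> x * t n x - indicator \<Omega> x * u x) (\<lambda>x. indicator \<Omega> x * t n x - indicator \<Omega> x * u x)) \<longlonglongrightarrow> 0"
    "(\<lambda>n. ip M (\<lambda>x. (1 - indicator \<Omega> x) * t n x - (1 - indicator \<Omega> x) * u x) (\<lambda>x. (1 - indicator \<Omega> x) * t n x - (1 - indicator \<Omega> x) * u x)) \<longlonglongrightarrow> 0"
    "(\<lambda>x. indicator \<Omega> x * u x) \<in> D" "(\<lambda>x. (1 - indicator \<Omega> x) * u x) \<in> D"
    "\<And>n. \<forall>x\<in>space M. \<bar>t n x\<bar> \<le> real n + 1" "\<And>n. t n \<in> D"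
proof -
  have mI[measurable]: "(\<lambda>x. indicator \<Omega> x :: real) \<in> borel_measurable M" using Om by simp
  have mO: "(\<lambda>x. 1 - indicator \<Omega> x :: real) \<in> borel_measurable M" using Om by simp
  have rI: "\<And>x. indicator \<Omega> x = (0::real) \<or> indicator \<Omega> x = (1::real)" by (rule ind01)
  have rO: "\<And>x. 1 - indicator \<Omega> x = (0::real) \<or> 1 - indicator \<Omega> x = (1::real)" using ind01 by (metis cancel_comm_monoid_add_class.diff_cancel diff_zero)
  have tb: "\<forall>x\<in>space M. \<bar>t n x\<bar> \<le> real n + 1" for n by (auto simp: t_def)
  show "\<And>n. \<forall>x\<in>space M. \<bar>t n x\<bar> \<le> real n + 1" by (rule tb)
  have tD: "t n \<in> D" and tX: "X (t n) (t n) \<le> X u u" for n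
    using clamp[OF _ u, of "- (real n + 1)" "real n + 1"] by (auto simp: t_def)
  show "\<And>n. t n \<in> D" by (rule tD)
  have pos: "real n + 1 > 0" for n by simp
  show tI: "\<And>n. (\<lambda>x. indicator \<Omega> x * t n x) \<in> D" using split_bdd[OF Z tD tb pos] by blast
  show tO: "\<And>n. (\<lambda>x. (1 - indicator \<Omega> x) * t n x) \<in> D" using split_bdd[OF Z tD tb pos] by blast
  have cr: "X (\<lambda>x. indicator \<Omega> x * t n x) (\<lambda>x. (1 - indicator \<Omega> x) * t n x) = 0" for n
    by (rule cross_bdd[OF Z tD tb tD tb pos])
  have sp: "t n = (\<lambda>x. (indicator \<Omega> x * t n x) + ((1 - indicator \<Omega> x) * t n x))" for n
    by (auto simp: algebra_simps)
  have q: "X (t n) (t n) = X (\<lambda>x. indicator \<Omega> x * t n x) (\<lambda>x. indicator \<Omega> x * t n x)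
     + X (\<lambda>x. (1 - indicator \<Omega> x) * t n x) (\<lambda>x. (1 - indicator \<Omega> x) * t n x)" for n
    using quad_add[OF tI tO, of n n] cr[of n] sp[of n] by simp
  have XI: "X (\<lambda>x. indicator \<Omega> x * t n x) (\<lambda>x. indicator \<Omega> x * t n x) \<le> X u u" for n
    using q[of n] tX[of n] nonneg[OF tO[of n]] by linarith
  have XO: "X (\<lambda>x. (1 - indicator \<Omega> x) * t n x) (\<lambda>x. (1 - indicator \<Omega> x) * t n x) \<le> X u u" for n
    using q[of n] tX[of n] nonneg[OF tI[of n]] by linarith
  show "\<And>n. X (\<lambda>x. indicator \<Omega> x * t n x) (\<lambda>x. indicator \<Omega> x * t n x) \<le> X u u" by (rule XI)
  show "\<And>n. X (\<lambda>x. (1 - indicator \<Omega> x) * t n x) (\<lambda>x. (1 - indicator \<Omega> x) * t n x) \<le> X u u" by (rule XO)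
  have uL: "u \<in> L2 M" using DL2[OF u] .
  have tc: "(\<lambda>n. ip M (\<lambda>x. t n x - u x) (\<lambda>x. t n x - u x)) \<longlonglongrightarrow> 0"
    unfolding t_def using trunc_conv[OF uL] .
  have cI: "(\<lambda>n. ip M (\<lambda>x. indicator \<Omega> x * t n x - indicator \<Omega> x * u x) (\<lambda>x. indicator \<Omega> x * t n x - indicator \<Omega> x * u x)) \<longlonglongrightarrow> 0"
    by (rule tendsto_sandwich[OF _ _ tendsto_const tc])
       (auto intro!: always_eventually ip_nonneg ip_weight[OF DL2[OF tD] uL mI rI])
  have cO: "(\<lambda>n. ip M (\<lambda>x. (1 - indicator \<Omega> x) * t n x - (1 - indicator \<Omega> x) * u x) (\<lambda>x. (1 - indicator \<Omega> x) * t n x - (1 - indicator \<Omega> x) * u x)) \<longlonglongrightarrow> 0"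
    by (rule tendsto_sandwich[OF _ _ tendsto_const tc])
       (auto intro!: always_eventually ip_nonneg ip_weight[OF DL2[OF tD] uL mO rO])
  show "(\<lambda>n. ip M (\<lambda>x. indicator \<Omega> x * t n x - indicator \<Omega> x * u x) (\<lambda>x. indicator \<Omega> x * t n x - indicator \<Omega> x * u x)) \<longlonglongrightarrow> 0" by (rule cI)
  show "(\<lambda>n. ip M (\<lambda>x. (1 - indicator \<Omega> x) * t n x - (1 - indicator \<Omega> x) * u x) (\<lambda>x. (1 - indicator \<Omega> x) * t n x - (1 - indicator \<Omega> x) * u x)) \<longlonglongrightarrow> 0" by (rule cO)
  show "(\<lambda>x. indicator \<Omega> x * u x) \<in> D"
    using lsc[OF cl tI XI cI L2_weight[OF uL mI rI]] by blast
  show "(\<lambda>x. (1 - indicator \<Omega> x) * u x) \<in> D"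
    using lsc[OF cl tO XO cO L2_weight[OF uL mO rO]] by blast
qed

end

context mform begin

lemma cross_gen:
  assumes Z: "(\<lambda>x. indicator \<Omega> x) \<in> D" "X (\<lambda>x. indicator \<Omega> x) (\<lambda>x. indicator \<Omega> x) = 0"
  and Om: "\<Omega> \<in> sets M" and u: "u \<in> D" and v: "v \<in> D"
  shows "X (\<lambda>x. indicator \<Omega> x * u x) (\<lambda>x. (1 - indicator \<Omega> x) * v x) = 0"
proof -
  define tu where "tu n = (\<lambda>x. min (real n + 1) (max (- (real n + 1)) (u x)))" for n
  define tv where "tv n = (\<lambda>x. min (real n + 1) (max (- (real n + 1)) (v x)))" for n
  define a where "a n = (\<lambda>x. indicator \<Omega> x * tu n x)" for n
  define b where "b n = (\<lambda>x. (1 - indicator \<Omega> x) * tv n x)" for n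
  note pu = parts[OF Z Om u] and pv = parts[OF Z Om v]
  have aD: "a n \<in> D" for n unfolding a_def tu_def by (rule pu(1))
  have bD: "b n \<in> D" for n unfolding b_def tv_def by (rule pv(2))
  have aX: "X (a n) (a n) \<le> X u u" for n unfolding a_def tu_def by (rule pu(3))
  have bX: "X (b n) (b n) \<le> X v v" for n unfolding b_def tv_def by (rule pv(4))
  have ac: "(\<lambda>n. ip M (\<lambda>x. a n x - indicator \<Omega> x * u x) (\<lambda>x. a n x - indicator \<Omega> x * u x)) \<longlonglongrightarrow> 0"
    unfolding a_def tu_def by (rule pu(5))
  have bc: "(\<lambda>n. ip M (\<lambda>x. b n x - (1 - indicator \<Omega> x) * v x) (\<lambda>x. b n x - (1 - indicator \<Omega> x) * v x)) \<longlonglongrightarrow> 0"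
    unfolding b_def tv_def by (rule pv(6))
  have uI: "(\<lambda>x. indicator \<Omega> x * u x) \<in> D" by (rule pu(7))
  have vO: "(\<lambda>x. (1 - indicator \<Omega> x) * v x) \<in> D" by (rule pv(8))
  have ab: "X (a n) (b m) = 0" for n m
  proof -
    have c: "real n + real m + 1 > 0" by simp
    have "\<forall>x\<in>space M. \<bar>tu n x\<bar> \<le> real n + real m + 1"
      using pu(9)[of n] unfolding tu_def by force
    moreover have "\<forall>x\<in>space M. \<bar>tv m x\<bar> \<le> real n + real m + 1"
      using pv(9)[of m] unfolding tv_def by force
    moreover have "tu n \<in> D" "tv m \<in> D" unfolding tu_def tv_def by (rule pu(10), rule pv(10))
    ultimately show ?thesis unfolding a_def b_def using cross_bdd[OF Z _ _ _ _ c] by blast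
  qed
  have s1: "X (b m) (\<lambda>x. indicator \<Omega> x * u x) = 0" for m
  proof -
    have "(\<lambda>n. X (b m) (a n)) \<longlonglongrightarrow> X (b m) (\<lambda>x. indicator \<Omega> x * u x)"
      by (rule wc[OF cl aD aX ac uI bD])
    moreover have "(\<lambda>n. X (b m) (a n)) = (\<lambda>n. 0)" using ab symm[OF aD bD] by (auto simp: fun_eq_iff)
    ultimately show ?thesis by (simp add: LIMSEQ_const_iff)
  qed
  have "(\<lambda>m. X (\<lambda>x. indicator \<Omega> x * u x) (b m)) \<longlonglongrightarrow> X (\<lambda>x. indicator \<Omega> x * u x) (\<lambda>x. (1 - indicator \<Omega> x) * v x)"
    by (rule wc[OF cl bD bX bc vO uI])
  moreover have "(\<lambda>m. X (\<lambda>x. indicator \<Omega> x * u x) (b m)) = (\<lambda>n. 0)" using s1 symm[OF bD uI] by (auto simp: fun_eq_iff)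
  ultimately show ?thesis by (simp add: LIMSEQ_const_iff)
qed

lemma invariant:
  assumes Z: "(\<lambda>x. indicator \<Omega> x) \<in> D" "X (\<lambda>x. indicator \<Omega> x) (\<lambda>x. indicator \<Omega> x) = 0"
  and Om: "\<Omega> \<in> sets M"
  shows "invariant_set M D X \<Omega>"
  unfolding invariant_set_def
proof (intro conjI Om allI impI ballI)
  fix \<alpha> :: real and f u assume "\<alpha> > 0" "f \<in> L2 M" and rs: "resolvent_sol M D X \<alpha> f u"
  have u: "u \<in> D" and res: "\<And>v. v \<in> D \<Longrightarrow> X u v + \<alpha> * ip M u v = ip M f v" using rs by (auto simp: resolvent_sol_def)
  have uI: "(\<lambda>x. indicator \<Omega> x * u x) \<in> D" by (rule parts(7)[OF Z Om u])
  have uO: "(\<lambda>x. (1 - indicator \<Omega> x) * u x) \<in> D" by (rule parts(8)[OF Z Om u])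
  have "X (\<lambda>x. indicator \<Omega> x * u x) v + \<alpha> * ip M (\<lambda>x. indicator \<Omega> x * u x) v = ip M (\<lambda>x. indicator \<Omega> x * f x) v"
    if v: "v \<in> D" for v
  proof -
    have vI: "(\<lambda>x. indicator \<Omega> x * v x) \<in> D" by (rule parts(7)[OF Z Om v])
    have vO: "(\<lambda>x. (1 - indicator \<Omega> x) * v x) \<in> D" by (rule parts(8)[OF Z Om v])
    have ve: "v = (\<lambda>x. indicator \<Omega> x * v x + (1 - indicator \<Omega> x) * v x)" by (auto simp: algebra_simps)
    have ue: "u = (\<lambda>x. indicator \<Omega> x * u x + (1 - indicator \<Omega> x) * u x)" by (auto simp: algebra_simps)
    have "X (\<lambda>x. indicator \<Omega> x * u x) v = X (\<lambda>x. indicator \<Omega> x * u x) (\<lambda>x. indicator \<Omega> x * v x) + X (\<lambda>x. indicator \<Omega> x * u x) (\<lambda>x. (1 - indicator \<Omega> x) * v x)"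
      using addR[OF vI vO uI] ve by metis
    also have "X (\<lambda>x. indicator \<Omega> x * u x) (\<lambda>x. (1 - indicator \<Omega> x) * v x) = 0" by (rule cross_gen[OF Z Om u v])
    finally have a: "X (\<lambda>x. indicator \<Omega> x * u x) v = X (\<lambda>x. indicator \<Omega> x * u x) (\<lambda>x. indicator \<Omega> x * v x)" by simp
    have "X u (\<lambda>x. indicator \<Omega> x * v x) = X (\<lambda>x. indicator \<Omega> x * u x) (\<lambda>x. indicator \<Omega> x * v x) + X (\<lambda>x. (1 - indicator \<Omega> x) * u x) (\<lambda>x. indicator \<Omega> x * v x)"
      using addL[OF uI uO vI] ue by metis
    also have "X (\<lambda>x. (1 - indicator \<Omega> x) * u x) (\<lambda>x. indicator \<Omega> x * v x) = 0"
      using cross_gen[OF Z Om v u] symm[OF uO vI] by simp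
    finally have b: "X u (\<lambda>x. indicator \<Omega> x * v x) = X (\<lambda>x. indicator \<Omega> x * u x) (\<lambda>x. indicator \<Omega> x * v x)" by simp
    have c: "ip M (\<lambda>x. indicator \<Omega> x * u x) v = ip M u (\<lambda>x. indicator \<Omega> x * v x)"
      unfolding ip_def by (rule Bochner_Integration.integral_cong) (auto simp: algebra_simps)
    have d: "ip M (\<lambda>x. indicator \<Omega> x * f x) v = ip M f (\<lambda>x. indicator \<Omega> x * v x)"
      unfolding ip_def by (rule Bochner_Integration.integral_cong) (auto simp: algebra_simps)
    show ?thesis using res[OF vI] a b c d by simp
  qed
  thus "resolvent_sol M D X \<alpha> (\<lambda>x. indicator \<Omega> x * f x) (\<lambda>x. indicator \<Omega> x * u x)"
    using uI by (simp add: resolvent_sol_def)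
qed

end

locale pair =
  A: lform M D A + B: lform M D B for M :: "'a::metric_space measure" and D A B +
  fixes \<delta> :: real
  assumes le: "\<And>u. u \<in> D \<Longrightarrow> A u u \<le> B u u" and dpos: "\<delta> > 0"
    and Breg: "regular_form M D B" and Bdense: "dense_domain M D" and Birr: "irreducible_form M D B"
begin

definition E where "E = (\<lambda>u v. (1 + \<delta>) * B u v - A u v)"

lemma Eeq: "E u v = (1 + \<delta>) * B u v - A u v" by (simp add: E_def)

lemma Enon: "u \<in> D \<Longrightarrow> \<delta> * B u u \<le> E u u"
  using le[of u] by (simp add: Eeq algebra_simps)

lemma Ele: "u \<in> D \<Longrightarrow> E u u \<le> (1 + \<delta>) * B u u"
  using A.nonneg[of u] by (simp add: Eeq)

lemma Esym: "symmetric_form M D E"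
proof -
  have h1: "D \<subseteq> L2 M" using B.DL2 by blast
  have h2: "(\<lambda>x. 0) \<in> D" by (rule B.zero)
  have h3: "\<forall>u\<in>D. \<forall>v\<in>D. (\<lambda>x. u x + v x) \<in> D" using B.add by blast
  have h4: "\<forall>c::real. \<forall>u\<in>D. (\<lambda>x. c * u x) \<in> D" using B.smult by blast
  have h5: "\<forall>u\<in>D. \<forall>v\<in>L2 M. (AE x in M. u x = v x) \<longrightarrow> v \<in> D \<and> (\<forall>w\<in>D. E u w = E v w)"
  proof (intro ballI impI)
    fix u v assume u: "u \<in> D" and v: "v \<in> L2 M" and ae: "AE x in M. u x = v x"
    have a: "v \<in> D" "\<forall>w\<in>D. A u w = A v w" using A.ae[OF u v ae] by auto
    have b: "\<forall>w\<in>D. B u w = B v w" using B.ae[OF u v ae] by auto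
    show "v \<in> D \<and> (\<forall>w\<in>D. E u w = E v w)" using a b by (simp add: Eeq)
  qed
  have h6: "\<forall>u\<in>D. \<forall>v\<in>D. E u v = E v u" using A.symm B.symm by (simp add: Eeq)
  have h7: "\<forall>u\<in>D. \<forall>v\<in>D. \<forall>w\<in>D. E (\<lambda>x. u x + v x) w = E u w + E v w"
    using A.addL B.addL by (simp add: Eeq algebra_simps)
  have h8: "\<forall>c::real. \<forall>u\<in>D. \<forall>w\<in>D. E (\<lambda>x. c * u x) w = c * E u w"
    using A.smultL B.smultL by (simp add: Eeq algebra_simps)
  have h9: "\<forall>u\<in>D. E u u \<ge> 0"
  proof
    fix u assume u: "u \<in> D"
    have "0 \<le> \<delta> * B u u" using dpos B.nonneg[OF u] by simp
    thus "E u u \<ge> 0" using Enon[OF u] by linarith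
  qed
  show ?thesis unfolding symmetric_form_def by (intro conjI h1 h2 h3 h4 h5 h6 h7 h8 h9)
qed

sublocale E: sform M D E by (unfold_locales) (rule Esym)

lemma E1le: "w \<in> D \<Longrightarrow> E1 M E w \<le> (1 + \<delta>) * E1 M B w"
proof -
  assume w: "w \<in> D"
  have "0 \<le> \<delta> * ip M w w" using dpos ip_nonneg[of M w] by simp
  thus ?thesis using Ele[OF w] by (simp add: E1_def algebra_simps)
qed

lemma E1ge: "w \<in> D \<Longrightarrow> E1 M B w \<le> (1 + 1 / \<delta>) * E1 M E w"
proof -
  assume w: "w \<in> D"
  have "B w w \<le> E w w / \<delta>" using Enon[OF w] dpos by (simp add: field_simps)
  moreover have "0 \<le> E w w" using E.nonneg[OF w] .
  moreover have "0 \<le> ip M w w" by (rule ip_nonneg)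
  ultimately have "B w w + ip M w w \<le> (1 + 1/\<delta>) * (E w w + ip M w w)"
    using dpos by (simp add: field_simps) (smt (verit) divide_nonneg_pos mult_nonneg_nonneg)
  thus ?thesis by (simp add: E1_def)
qed

lemma Eclosed: "closed_form M D E"
  unfolding closed_form_def
proof (intro allI impI)
  fix s :: "nat \<Rightarrow> 'a \<Rightarrow> real"
  assume h: "(\<forall>n. s n \<in> D) \<and> (\<forall>e>0. \<exists>N. \<forall>n\<ge>N. \<forall>k\<ge>N. E1 M E (\<lambda>x. s n x - s k x) < e)"
  have sD: "s n \<in> D" for n using h by blast
  let ?k = "1 + 1 / \<delta>"
  have "1 / \<delta> > 0" using dpos by simp
  hence k: "?k > 0" by linarith
  have "\<forall>e>0. \<exists>N. \<forall>n\<ge>N. \<forall>k\<ge>N. E1 M B (\<lambda>x. s n x - s k x) < e"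
  proof (intro allI impI)
    fix e :: real assume e: "e > 0"
    obtain N where N: "\<forall>n\<ge>N. \<forall>k\<ge>N. E1 M E (\<lambda>x. s n x - s k x) < e / ?k" using h e k by (meson divide_pos_pos)
    have "E1 M B (\<lambda>x. s n x - s k x) < e" if "n \<ge> N" "k \<ge> N" for n k
    proof -
      have "E1 M B (\<lambda>x. s n x - s k x) \<le> ?k * E1 M E (\<lambda>x. s n x - s k x)" using E1ge[OF B.diff[OF sD sD]] .
      also have "\<dots> < ?k * (e / ?k)" using N that k by (intro mult_strict_left_mono) auto
      finally show ?thesis using k by simp
    qed
    thus "\<exists>N. \<forall>n\<ge>N. \<forall>k\<ge>N. E1 M B (\<lambda>x. s n x - s k x) < e" by blast
  qed
  then obtain u where u: "u \<in> D" and conv: "(\<lambda>n. E1 M B (\<lambda>x. s n x - u x)) \<longlonglongrightarrow> 0"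
    using B.cl sD unfolding closed_form_def by blast
  have "(\<lambda>n. (1 + \<delta>) * E1 M B (\<lambda>x. s n x - u x)) \<longlonglongrightarrow> (1 + \<delta>) * 0" by (intro tendsto_intros conv)
  hence c2: "(\<lambda>n. (1 + \<delta>) * E1 M B (\<lambda>x. s n x - u x)) \<longlonglongrightarrow> 0" by simp
  have "(\<lambda>n. E1 M E (\<lambda>x. s n x - u x)) \<longlonglongrightarrow> 0"
  proof (rule tendsto_sandwich[OF _ _ tendsto_const c2])
    show "\<forall>\<^sub>F n in sequentially. 0 \<le> E1 M E (\<lambda>x. s n x - u x)"
      using E.nonneg[OF B.diff[OF sD u]] ip_nonneg by (auto intro!: always_eventually add_nonneg_nonneg simp: E1_def)
    show "\<forall>\<^sub>F n in sequentially. E1 M E (\<lambda>x. s n x - u x) \<le> (1 + \<delta>) * E1 M B (\<lambda>x. s n x - u x)"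
      using E1le[OF B.diff[OF sD u]] by (auto intro!: always_eventually)
  qed
  thus "\<exists>u\<in>D. (\<lambda>n. E1 M E (\<lambda>x. s n x - u x)) \<longlonglongrightarrow> 0" using u by blast
qed


lemma ip_T: "a \<in> L2 M \<Longrightarrow> b \<in> L2 M \<Longrightarrow>
  ip M (\<lambda>x. min 1 (max 0 (a x)) - min 1 (max 0 (b x))) (\<lambda>x. min 1 (max 0 (a x)) - min 1 (max 0 (b x)))
  \<le> ip M (\<lambda>x. a x - b x) (\<lambda>x. a x - b x)"
proof -
  assume a: "a \<in> L2 M" and b: "b \<in> L2 M"
  have am[measurable]: "a \<in> borel_measurable M" and bm[measurable]: "b \<in> borel_measurable M" using a b by (auto simp: L2_def)
  have d: "(\<lambda>x. a x - b x) \<in> L2 M" using L2_diff[OF a b] .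
  have "ip M (\<lambda>x. min 1 (max 0 (a x)) - min 1 (max 0 (b x))) (\<lambda>x. min 1 (max 0 (a x)) - min 1 (max 0 (b x)))
     \<le> integral\<^sup>L M (\<lambda>x. (a x - b x)^2)"
  proof (rule ip_mono)
    show "(\<lambda>x. min 1 (max 0 (a x)) - min 1 (max 0 (b x))) \<in> borel_measurable M" by measurable
    show "integrable M (\<lambda>x. (a x - b x)^2)" using d by (simp add: L2_def)
    fix x
    have "\<bar>min 1 (max 0 (a x)) - min 1 (max 0 (b x))\<bar> \<le> \<bar>a x - b x\<bar>" by (auto simp: min_def max_def abs_le_iff)
    from power_mono[OF this abs_ge_zero, of 2] show "(min 1 (max 0 (a x)) - min 1 (max 0 (b x)))^2 \<le> (a x - b x)^2" by simp
  qed
  thus ?thesis by (simp add: ip_sq)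
qed

lemma E1B_swap: "a \<in> D \<Longrightarrow> b \<in> D \<Longrightarrow> E1 M B (\<lambda>x. a x - b x) = E1 M B (\<lambda>x. b x - a x)"
  using B.quad_diff[of a b] B.quad_diff[of b a] B.symm[of a b] ip_swap[of M a b] by (simp add: E1_def)

lemma Emark_cont:
  assumes v: "v \<in> D" and vc: "continuous_on (space M) v"
  shows "E (\<lambda>x. min 1 (max 0 (v x))) (\<lambda>x. min 1 (max 0 (v x))) \<le> E v v"
proof -
  define T where "T = (\<lambda>x. min 1 (max 0 (v x)))"
  have TD: "T \<in> D" unfolding T_def using B.unit[OF v] by blast
  have wD: "(\<lambda>x. v x - T x) \<in> D" by (rule B.diff[OF v TD])
  have ka: "A T (\<lambda>x. v x - T x) = 0" unfolding T_def by (rule A.key[OF v vc])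
  have kb: "B T (\<lambda>x. v x - T x) = 0" unfolding T_def by (rule B.key[OF v vc])
  have "E (\<lambda>x. T x + (v x - T x)) (\<lambda>x. T x + (v x - T x)) = E T T + 2 * E T (\<lambda>x. v x - T x) + E (\<lambda>x. v x - T x) (\<lambda>x. v x - T x)"
    by (rule E.quad_add[OF TD wD])
  moreover have "(\<lambda>x. T x + (v x - T x)) = v" by auto
  moreover have "E T (\<lambda>x. v x - T x) = 0" using ka kb by (simp add: Eeq)
  moreover have "0 \<le> E (\<lambda>x. v x - T x) (\<lambda>x. v x - T x)" by (rule E.nonneg[OF wD])
  ultimately show ?thesis unfolding T_def[symmetric] by simp
qed

lemma Emark: "markovian M D E"
  unfolding markovian_def
proof (intro ballI conjI)
  fix u assume u: "u \<in> D"
  show TD: "(\<lambda>x. min 1 (max 0 (u x))) \<in> D" using B.unit[OF u] by blast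
  have "\<forall>n::nat. \<exists>v\<in>D. continuous_on (space M) v \<and> E1 M B (\<lambda>x. u x - v x) < 1 / (real n + 1)"
    using Breg u unfolding regular_form_def by simp
  then obtain V where V: "\<And>n. V n \<in> D" "\<And>n. continuous_on (space M) (V n)" "\<And>n. E1 M B (\<lambda>x. u x - V n x) < 1 / (real n + 1)"
    by metis
  show "E (\<lambda>x. min 1 (max 0 (u x))) (\<lambda>x. min 1 (max 0 (u x))) \<le> E u u"
  proof (rule field_le_epsilon)
    fix \<epsilon> :: real assume e: "\<epsilon> > 0"
    define \<eta> where "\<eta> = \<epsilon> / (2 * (E u u + 1))"
    have Eu0: "0 \<le> E u u" using E.nonneg[OF u] .
    have eta: "\<eta> > 0" using e Eu0 by (simp add: \<eta>_def)
    have etaE: "\<eta> * E u u \<le> \<epsilon> / 2"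
    proof -
      have "\<eta> * E u u \<le> \<eta> * (E u u + 1)" using eta by simp
      also have "\<dots> = \<epsilon> / 2" using Eu0 by (simp add: \<eta>_def field_simps)
      finally show ?thesis .
    qed
    define K where "K = (1 + \<delta>) * (1 + 1 / \<eta>)"
    have K: "K > 0" using dpos eta by (simp add: K_def add_pos_pos)
    obtain N :: nat where N: "2 * K / \<epsilon> < real N" using reals_Archimedean2 by blast
    have KN: "K / (real m + 1) \<le> \<epsilon> / 2" if "m \<ge> N" for m
    proof -
      have "2 * K < \<epsilon> * (real m + 1)" using N that e by (simp add: field_simps) (smt (verit) of_nat_mono mult_left_mono)
      thus ?thesis by (simp add: field_simps)
    qed
    define F where "F n = (\<lambda>x. min 1 (max 0 (V (n + N) x)))" for n
    have FD: "F n \<in> D" for n unfolding F_def using B.unit[OF V(1)] by blast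
    have FE: "E (F n) (F n) \<le> E u u + \<epsilon>" for n
    proof -
      let ?m = "n + N"
      let ?d = "\<lambda>x. V ?m x - u x"
      have dD: "?d \<in> D" using B.diff[OF V(1) u] .
      have Ed: "E ?d ?d \<le> (1 + \<delta>) / (real ?m + 1)"
      proof -
        have a: "E ?d ?d \<le> (1 + \<delta>) * B ?d ?d" by (rule Ele[OF dD])
        have b: "B ?d ?d \<le> E1 M B ?d" using ip_nonneg[of M ?d] by (simp add: E1_def)
        have c: "E1 M B ?d = E1 M B (\<lambda>x. u x - V ?m x)" by (rule E1B_swap[OF V(1) u])
        have d: "E1 M B (\<lambda>x. u x - V ?m x) < 1 / (real ?m + 1)" by (rule V(3))
        have "(1 + \<delta>) * B ?d ?d \<le> (1 + \<delta>) * (1 / (real ?m + 1))"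
          using b c d dpos by (intro mult_left_mono) auto
        thus ?thesis using a by simp
      qed
      have Ed0: "0 \<le> E ?d ?d" by (rule E.nonneg[OF dD])
      have "E (V ?m) (V ?m) = E u u + 2 * E u ?d + E ?d ?d" using E.quad_add[OF u dD] by simp
      moreover have "2 * \<bar>E u ?d\<bar> \<le> \<eta> * E u u + E ?d ?d / \<eta>" by (rule E.amgm_eta[OF u dD eta])
      moreover have "E ?d ?d + E ?d ?d / \<eta> = (1 + 1/\<eta>) * E ?d ?d" by (simp add: algebra_simps)
      moreover have "(1 + 1/\<eta>) * E ?d ?d \<le> (1 + 1/\<eta>) * ((1 + \<delta>) / (real ?m + 1))"
        using Ed eta by (intro mult_left_mono) auto
      moreover have "(1 + 1/\<eta>) * ((1 + \<delta>) / (real ?m + 1)) = K / (real ?m + 1)" by (simp add: K_def)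
      moreover have "K / (real ?m + 1) \<le> \<epsilon> / 2" using KN[of ?m] by simp
      ultimately have EV: "E (V ?m) (V ?m) \<le> E u u + \<epsilon>" using etaE abs_ge_minus_self[of "E u ?d"] abs_ge_self[of "E u ?d"] by linarith
      have "E (F n) (F n) \<le> E (V ?m) (V ?m)" unfolding F_def by (rule Emark_cont[OF V(1,2)])
      thus ?thesis using EV by linarith
    qed
    have uL: "u \<in> L2 M" using B.DL2[OF u] .
    have conv: "(\<lambda>n. ip M (\<lambda>x. F n x - min 1 (max 0 (u x))) (\<lambda>x. F n x - min 1 (max 0 (u x)))) \<longlonglongrightarrow> 0"
    proof (rule tendsto_sandwich[OF _ _ tendsto_const])
      show "\<forall>\<^sub>F n in sequentially. 0 \<le> ip M (\<lambda>x. F n x - min 1 (max 0 (u x))) (\<lambda>x. F n x - min 1 (max 0 (u x)))"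
        by (auto intro!: always_eventually ip_nonneg)
      show "\<forall>\<^sub>F n in sequentially. ip M (\<lambda>x. F n x - min 1 (max 0 (u x))) (\<lambda>x. F n x - min 1 (max 0 (u x))) \<le> 1 / (real n + 1)"
      proof (intro always_eventually allI)
        fix n
        have "ip M (\<lambda>x. F n x - min 1 (max 0 (u x))) (\<lambda>x. F n x - min 1 (max 0 (u x))) \<le> ip M (\<lambda>x. V (n + N) x - u x) (\<lambda>x. V (n + N) x - u x)"
          unfolding F_def by (rule ip_T[OF B.DL2[OF V(1)] uL])
        also have "\<dots> = ip M (\<lambda>x. u x - V (n + N) x) (\<lambda>x. u x - V (n + N) x)" by (rule ip_swap)
        also have "\<dots> \<le> E1 M B (\<lambda>x. u x - V (n + N) x)" using B.nonneg[OF B.diff[OF u V(1)]] by (simp add: E1_def)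
        also have "\<dots> < 1 / (real (n + N) + 1)" by (rule V(3))
        also have "\<dots> \<le> 1 / (real n + 1)" by (intro divide_left_mono) auto
        finally show "ip M (\<lambda>x. F n x - min 1 (max 0 (u x))) (\<lambda>x. F n x - min 1 (max 0 (u x))) \<le> 1 / (real n + 1)" by simp
      qed
      have "(\<lambda>n. 1 / (real n + 1)) = (\<lambda>n. inverse (real (Suc n)))" by (auto simp: inverse_eq_divide add.commute)
      thus "(\<lambda>n. 1 / (real n + 1)) \<longlonglongrightarrow> 0" using LIMSEQ_inverse_real_of_nat by simp
    qed
    have TL: "(\<lambda>x. min 1 (max 0 (u x))) \<in> L2 M" using B.DL2[OF TD] .
    from E.lsc[OF Eclosed FD FE conv TL]
    show "E (\<lambda>x. min 1 (max 0 (u x))) (\<lambda>x. min 1 (max 0 (u x))) \<le> E u u + \<epsilon>" by blast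
  qed
qed


lemma Ereg: "regular_form M D E"
  unfolding regular_form_def
proof (intro conjI ballI allI impI)
  fix u and e :: real assume u: "u \<in> D" and e: "e > 0"
  have "e / (1 + \<delta>) > 0" using e dpos by simp
  then obtain v where v: "v \<in> D" "continuous_on (space M) v" "E1 M B (\<lambda>x. u x - v x) < e / (1 + \<delta>)"
    using Breg u unfolding regular_form_def by blast
  have "E1 M E (\<lambda>x. u x - v x) \<le> (1 + \<delta>) * E1 M B (\<lambda>x. u x - v x)" by (rule E1le[OF B.diff[OF u v(1)]])
  also have "\<dots> < (1 + \<delta>) * (e / (1 + \<delta>))" using v(3) dpos by (intro mult_strict_left_mono) auto
  also have "\<dots> = e" using dpos by simp
  finally show "\<exists>v\<in>D. continuous_on (space M) v \<and> E1 M E (\<lambda>x. u x - v x) < e" using v by blast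
next
  fix g :: "'a \<Rightarrow> real" and e :: real assume "continuous_on (space M) g" "e > 0"
  thus "\<exists>v\<in>D. continuous_on (space M) v \<and> (\<forall>x\<in>space M. \<bar>v x - g x\<bar> < e)"
    using Breg unfolding regular_form_def by blast
qed

lemma Eloc: "local_form M D E"
  unfolding local_form_def
proof (intro ballI impI)
  fix u v assume "u \<in> D" "v \<in> D" and h: "compact (fn_support M u) \<and> compact (fn_support M v) \<and> fn_support M u \<inter> fn_support M v = {}"
  hence "A u v = 0" "B u v = 0" using A.loc B.loc unfolding local_form_def by blast+
  thus "E u v = 0" by (simp add: Eeq)
qed

lemma Econs: "conservative_form M D E"
  unfolding conservative_form_def resolvent_sol_def
proof (intro allI impI conjI ballI)
  fix \<alpha> :: real assume a: "\<alpha> > 0"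
  show "(\<lambda>x. 1 / \<alpha>) \<in> D" by (rule B.cst)
  fix v assume v: "v \<in> D"
  have "E (\<lambda>x. 1 / \<alpha>) v = 0" using A.cstX[OF v] B.cstX[OF v] by (simp add: Eeq)
  moreover have "ip M (\<lambda>x. 1 / \<alpha>) v = (1 / \<alpha>) * ip M (\<lambda>x. 1) v" by (simp add: ip_def)
  ultimately show "E (\<lambda>x. 1 / \<alpha>) v + \<alpha> * ip M (\<lambda>x. 1 / \<alpha>) v = ip M (\<lambda>x. 1) v" using a by simp
qed

lemma Eirr: "irreducible_form M D E"
  unfolding irreducible_form_def
proof (intro allI impI)
  fix \<Omega> assume inv: "invariant_set M D E \<Omega>"
  have Om: "\<Omega> \<in> sets M" using inv by (simp add: invariant_set_def)
  have "resolvent_sol M D E 1 (\<lambda>x. 1) (\<lambda>x. 1 / 1)" using Econs[unfolded conservative_form_def, rule_format, of 1] by simp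
  moreover have "(\<lambda>x. 1::real) \<in> L2 M" using L2_const[OF B.fin] .
  moreover have "\<forall>\<alpha>>0. \<forall>f\<in>L2 M. \<forall>u. resolvent_sol M D E \<alpha> f u \<longrightarrow>
        resolvent_sol M D E \<alpha> (\<lambda>x. indicator \<Omega> x * f x) (\<lambda>x. indicator \<Omega> x * u x)"
    using inv unfolding invariant_set_def by (rule conjunct2)
  ultimately have "resolvent_sol M D E 1 (\<lambda>x. indicator \<Omega> x * 1) (\<lambda>x. indicator \<Omega> x * (1 / 1))"
    by (auto dest!: spec[of _ 1] bspec[of _ _ "\<lambda>x. 1"] spec[of _ "\<lambda>x. 1 / 1"])
  hence ZD: "(\<lambda>x. indicator \<Omega> x) \<in> D" and Zr: "\<And>v. v \<in> D \<Longrightarrow> E (\<lambda>x. indicator \<Omega> x) v + ip M (\<lambda>x. indicator \<Omega> x) v = ip M (\<lambda>x. indicator \<Omega> x) v"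
    unfolding resolvent_sol_def by auto
  have EZ: "E (\<lambda>x. indicator \<Omega> x) (\<lambda>x. indicator \<Omega> x) = 0" using Zr[OF ZD] by simp
  have "\<delta> * B (\<lambda>x. indicator \<Omega> x) (\<lambda>x. indicator \<Omega> x) \<le> 0" using Enon[OF ZD] EZ by simp
  hence BZ: "B (\<lambda>x. indicator \<Omega> x) (\<lambda>x. indicator \<Omega> x) = 0"
    using B.nonneg[OF ZD] dpos by (simp add: mult_le_0_iff)
  have "invariant_set M D B \<Omega>" by (rule B.invariant[OF ZD BZ Om])
  thus "emeasure M \<Omega> = 0 \<or> emeasure M (space M - \<Omega>) = 0" using Birr unfolding irreducible_form_def by blast
qed

lemma Edense: "dense_domain M D" by (rule Bdense)

lemma all: "dirichlet_form M D E \<and> regular_form M D E \<and> local_form M D E \<and> conservative_form M D E \<and> irreducible_form M D E"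
  unfolding dirichlet_form_def using Esym Edense Eclosed Emark Ereg Eloc Econs Eirr by blast

end

lemma mk_lform:
  fixes M :: "'a::metric_space measure"
  assumes cpt: "compact (space M)" and fin: "finite_measure M" and dir: "dirichlet_form M D X"
    and loc: "local_form M D X" and cons: "conservative_form M D X"
  shows "lform M D X"
proof -
  have sf: "symmetric_form M D X" and mk: "markovian M D X" and cl: "closed_form M D X"
    using dir by (auto simp: dirichlet_form_def)
  interpret sform M D X by (rule sform.intro[OF sf])
  have r1: "resolvent_sol M D X 1 (\<lambda>x. 1) (\<lambda>x. 1 / 1)" using cons[unfolded conservative_form_def, rule_format, of 1] by simp
  have oneD: "(\<lambda>x. 1::real) \<in> D" using r1 by (simp add: resolvent_sol_def)
  have oneX: "X (\<lambda>x. 1) v = 0" if "v \<in> D" for v using r1 that by (simp add: resolvent_sol_def)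
  have cst: "(\<lambda>x. c) \<in> D" for c using smult[OF oneD, of c] by simp
  have cstX: "X (\<lambda>x. c) w = 0" if "w \<in> D" for c w using smultL[OF oneD that, of c] oneX[OF that] by simp
  show ?thesis
  proof (intro lform.intro mform.intro cform.intro lform_axioms.intro mform_axioms.intro cform_axioms.intro)
    show "sform M D X" by (rule sform.intro[OF sf])
    show "\<And>c. (\<lambda>x. c) \<in> D" by (rule cst)
    show "\<And>c w. w \<in> D \<Longrightarrow> X (\<lambda>x. c) w = 0" by (rule cstX)
    show "markovian M D X" by (rule mk)
    show "closed_form M D X" by (rule cl)
    show "local_form M D X" by (rule loc)
    show "compact (space M)" by (rule cpt)
    show "finite_measure M" by (rule fin)
  qed
qed

theorem theorem2p1:
  fixes M :: "'a::metric_space measure"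
    and D :: "('a \<Rightarrow> real) set"
    and A B :: "('a \<Rightarrow> real) \<Rightarrow> ('a \<Rightarrow> real) \<Rightarrow> real"
    and \<delta> :: real
  assumes "compact (space M)"
    and "sets M = sets (restrict_space borel (space M))"
    and "finite_measure M"
    and "radon_measure M"
    and "dirichlet_form M D A" and "local_form M D A" and "regular_form M D A"
    and "conservative_form M D A" and "irreducible_form M D A"
    and "dirichlet_form M D B" and "local_form M D B" and "regular_form M D B"
    and "conservative_form M D B" and "irreducible_form M D B"
    and "\<forall>u\<in>D. A u u \<le> B u u"
    and "\<delta> > 0"
  shows "dirichlet_form M D (\<lambda>u v. (1 + \<delta>) * B u v - A u v)
       \<and> regular_form M D (\<lambda>u v. (1 + \<delta>) * B u v - A u v)
       \<and> local_form M D (\<lambda>u v. (1 + \<delta>) * B u v - A u v)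
       \<and> conservative_form M D (\<lambda>u v. (1 + \<delta>) * B u v - A u v)
       \<and> irreducible_form M D (\<lambda>u v. (1 + \<delta>) * B u v - A u v)"
proof -
  have lA: "lform M D A" using mk_lform assms by blast
  have lB: "lform M D B" using mk_lform assms by blast
  have P: "pair M D A B \<delta>"
  proof (rule pair.intro[OF lA lB pair_axioms.intro])
    show "\<And>u. u \<in> D \<Longrightarrow> A u u \<le> B u u" using assms by blast
    show "\<delta> > 0" using assms by blast
    show "regular_form M D B" using assms by blast
    show "dense_domain M D" using assms by (simp add: dirichlet_form_def)
    show "irreducible_form M D B" using assms by blast
  qed
  interpret P: pair M D A B \<delta> by (rule P)
  show ?thesis using P.all unfolding P.E_def .
qed

end
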